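(* Let $a,b$ be nonnegative integers with $a\ge b$. If $n\ge a+b$, then $\{\Phi_0,\Phi_1,\dots,\Phi_b\}$ is a basis of the $K$-vector space $\operatorname{Hom}_G(\Lambda^a\otimes\Lambda^b,\Lambda^a\otimes\Lambda^b)$.
   Context: $K$ is a field of characteristic zero, $G=GL(n,K)$, $V=K^n$, $\Lambda=\bigoplus_i\Lambda^i$ the exterior algebra of $V$. $m$ is multiplication and $\Delta_{s,t}:\Lambda^{s+t}\to\Lambda^s\otimes\Lambda^t$ the comultiplication component $v_1\cdots v_{s+t}\mapsto\sum_\sigma\mathrm{sgn}(\sigma)v_{\sigma(1)}\cdots v_{\sigma(s)}\otimes v_{\sigma(s+1)}\cdots v_{\sigma(s+t)}$ (permutations increasing on the first $s$ and on the last $t$ positions). For $0\le t\le b$: $\delta_t=(m\otimes1)\circ(1\otimes\Delta_{t,b-t}):\Lambda^a\otimes\Lambda^b\to\Lambda^{a+t}\otimes\Lambda^{b-t}$, $\theta_t=(1\otimes m)\circ(\Delta_{a,t}\otimes1):\Lambda^{a+t}\otimes\Lambda^{b-t}\to\Lambda^{a}\otimes\Lambda^{b}$, and $\Phi_t=\theta_t\circ\delta_t$ (so $\Phi_0$ is the identity). *)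

theory Defs
  imports Main
begin

text \<open>Coordinates: V = K^n with standard basis e_0,...,e_{n-1}. The exterior power
Lambda^k has basis e_S (S a k-subset of {0..<n}, wedge of e_s in increasing order).
An element of Lambda^a (x) Lambda^b is a coefficient function on pairs (S,T);
the space W n a b consists of those supported on k-subsets.\<close>

type_synonym 'a tensor = "nat set \<times> nat set \<Rightarrow> 'a"

definition idx :: "nat \<Rightarrow> nat \<Rightarrow> nat set set" where
  "idx n k = {S. S \<subseteq> {..<n} \<and> card S = k}"

definition W :: "nat \<Rightarrow> nat \<Rightarrow> nat \<Rightarrow> ('a::zero) tensor set" where
  "W n a b = {f. \<forall>P. P \<notin> idx n a \<times> idx n b \<longrightarrow> f P = 0}"

text \<open>Sign of the shuffle sorting the concatenation (S in increasing order, then T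
in increasing order): e_S \<and> e_T = sgn2 S T e_{S \<union> T} for disjoint S, T.\<close>
definition sgn2 :: "nat set \<Rightarrow> nat set \<Rightarrow> 'a::comm_ring_1" where
  "sgn2 S T = (-1) ^ card {(s,t). s \<in> S \<and> t \<in> T \<and> t < s}"

text \<open>delta_t on basis vector e_A (x) e_B:
  sum over t-subsets C of B of sgn(C,B-C) (e_A \<and> e_C) (x) e_{B-C}.\<close>
definition delta_basis :: "nat \<Rightarrow> nat set \<Rightarrow> nat set \<Rightarrow> ('a::comm_ring_1) tensor" where
  "delta_basis t A B = (\<lambda>(X,Y). \<Sum>C\<in>{C. C \<subseteq> B \<and> card C = t}.
      if A \<inter> C = {} \<and> X = A \<union> C \<and> Y = B - C then sgn2 C (B - C) * sgn2 A C else 0)"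

definition delta :: "nat \<Rightarrow> nat \<Rightarrow> nat \<Rightarrow> nat \<Rightarrow> ('a::comm_ring_1) tensor \<Rightarrow> 'a tensor" where
  "delta n a b t f = (\<lambda>Q. \<Sum>(A,B)\<in>idx n a \<times> idx n b. f (A,B) * delta_basis t A B Q)"

text \<open>theta_t on basis vector e_X (x) e_Y (X of size a+t):
  sum over a-subsets A of X of sgn(A,X-A) e_A (x) (e_{X-A} \<and> e_Y).\<close>
definition theta_basis :: "nat \<Rightarrow> nat set \<Rightarrow> nat set \<Rightarrow> ('a::comm_ring_1) tensor" where
  "theta_basis a X Y = (\<lambda>(A',B'). \<Sum>A\<in>{A. A \<subseteq> X \<and> card A = a}.
      if (X - A) \<inter> Y = {} \<and> A' = A \<and> B' = (X - A) \<union> Y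
      then sgn2 A (X - A) * sgn2 (X - A) Y else 0)"

definition theta :: "nat \<Rightarrow> nat \<Rightarrow> nat \<Rightarrow> nat \<Rightarrow> ('a::comm_ring_1) tensor \<Rightarrow> 'a tensor" where
  "theta n a b t g = (\<lambda>Q. \<Sum>(X,Y)\<in>idx n (a + t) \<times> idx n (b - t). g (X,Y) * theta_basis a X Y Q)"

definition Phi :: "nat \<Rightarrow> nat \<Rightarrow> nat \<Rightarrow> nat \<Rightarrow> ('a::comm_ring_1) tensor \<Rightarrow> 'a tensor" where
  "Phi n a b t f = theta n a b t (delta n a b t f)"

definition GL :: "nat \<Rightarrow> (nat \<Rightarrow> nat \<Rightarrow> 'a::comm_ring_1) set" where
  "GL n = {g. \<exists>h. \<forall>i<n. \<forall>j<n.
      (\<Sum>k<n. g i k * h k j) = (if i = j then 1 else 0) \<and>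
      (\<Sum>k<n. h i k * g k j) = (if i = j then 1 else 0)}"

text \<open>Minor det(g[S,S']) (rows S, columns S', both in increasing order), via Leibniz.\<close>
definition minor :: "(nat \<Rightarrow> nat \<Rightarrow> 'a::comm_ring_1) \<Rightarrow> nat set \<Rightarrow> nat set \<Rightarrow> 'a" where
  "minor g S S' = (\<Sum>p\<in>{p. bij_betw p S' S \<and> (\<forall>x. x \<notin> S' \<longrightarrow> p x = x)}.
      (-1) ^ card {(i,j). i \<in> S' \<and> j \<in> S' \<and> i < j \<and> p j < p i} * (\<Prod>j\<in>S'. g (p j) j))"

text \<open>Action of g on Lambda^a (x) Lambda^b: g e_{S'} = sum_S det(g[S,S']) e_S on each factor.\<close>
definition rho :: "nat \<Rightarrow> nat \<Rightarrow> nat \<Rightarrow> (nat \<Rightarrow> nat \<Rightarrow> 'a::comm_ring_1) \<Rightarrow> 'a tensor \<Rightarrow> 'a tensor" where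
  "rho n a b g f = (\<lambda>(S,T). if (S,T) \<in> idx n a \<times> idx n b then
      (\<Sum>(S',T')\<in>idx n a \<times> idx n b. minor g S S' * minor g T T' * f (S',T')) else 0)"

text \<open>Hom_G(Lambda^a (x) Lambda^b, Lambda^a (x) Lambda^b): K-linear, G-equivariant
endomorphisms of W n a b (maps are only relevant on W).\<close>
definition HomG :: "nat \<Rightarrow> nat \<Rightarrow> nat \<Rightarrow> (('a::comm_ring_1) tensor \<Rightarrow> 'a tensor) set" where
  "HomG n a b = {F. (\<forall>f\<in>W n a b. F f \<in> W n a b)
     \<and> (\<forall>f\<in>W n a b. \<forall>h\<in>W n a b. F (\<lambda>x. f x + h x) = (\<lambda>x. F f x + F h x))
     \<and> (\<forall>c. \<forall>f\<in>W n a b. F (\<lambda>x. c * f x) = (\<lambda>x. c * F f x))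
     \<and> (\<forall>g\<in>GL n. \<forall>f\<in>W n a b. F (rho n a b g f) = rho n a b g (F f))}"

end

theory Submission
  imports Defs "HOL-Library.FuncSet"
begin

definition Bij :: "nat set \<Rightarrow> nat set \<Rightarrow> (nat \<Rightarrow> nat) set" where
  "Bij S' S = {p. bij_betw p S' S \<and> (\<forall>x. x \<notin> S' \<longrightarrow> p x = x)}"
definition ninv :: "(nat \<Rightarrow> nat) \<Rightarrow> nat set \<Rightarrow> nat" where
  "ninv p S' = card {(i,j). i \<in> S' \<and> j \<in> S' \<and> i < j \<and> p j < p i}"
definition tm :: "(nat \<Rightarrow> nat \<Rightarrow> 'a::comm_ring_1) \<Rightarrow> (nat \<Rightarrow> nat) \<Rightarrow> nat set \<Rightarrow> 'a" where
  "tm g p S' = (-1)^ninv p S' * (\<Prod>j\<in>S'. g (p j) j)"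

lemma minor_alt: "minor g S S' = (\<Sum>p\<in>Bij S' S. tm g p S')"
  unfolding minor_def Bij_def ninv_def tm_def by simp

lemma finite_Bij: assumes "finite S'" "finite S" shows "finite (Bij S' S)"
proof -
  have "(\<lambda>p. restrict p S') ` Bij S' S \<subseteq> PiE S' (\<lambda>_. S)"
    by (auto simp: Bij_def bij_betw_def)
  hence "finite ((\<lambda>p. restrict p S') ` Bij S' S)"
    by (rule finite_subset) (use assms in \<open>simp add: finite_PiE\<close>)
  moreover have "inj_on (\<lambda>p. restrict p S') (Bij S' S)"
    unfolding inj_on_def Bij_def restrict_def by (auto simp: fun_eq_iff) metis
  ultimately show ?thesis using finite_imageD by blast
qed

lemma Bij_empty_card: assumes "finite S'" "card S \<noteq> card S'" shows "Bij S' S = {}"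
  using assms bij_betw_same_card unfolding Bij_def by fastforce

lemma minor_card: assumes "finite S'" "card S \<noteq> card S'" shows "minor g S S' = 0"
  using Bij_empty_card[OF assms] by (simp add: minor_alt)

lemma ninv_cong: "(\<And>x. x \<in> S \<Longrightarrow> p x = q x) \<Longrightarrow> ninv p S = ninv q S"
  unfolding ninv_def by (rule arg_cong[where f=card]) auto

lemma tm_cong: "(\<And>x. x \<in> S \<Longrightarrow> p x = q x) \<Longrightarrow> tm g p S = tm g q S"
  unfolding tm_def using ninv_cong[of S p q] by simp

lemma neg1_pow_2: "(-1::'a::comm_ring_1)^(x + 2*y) = (-1)^x"
  by (simp add: power_add power_mult)

lemma sgn2_sq: "sgn2 D Y * sgn2 D Y = (1::'a::comm_ring_1)"
  unfolding sgn2_def by (simp add: power_add[symmetric] neg1_pow_2[where y="card _" and x=0, simplified] mult_2[symmetric])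

lemma split_term:
  fixes g :: "nat \<Rightarrow> nat \<Rightarrow> 'a::comm_ring_1"
  assumes r: "r \<in> Bij B (D \<union> Y)" and dj: "D \<inter> Y = {}" and fB: "finite B"
    and C: "C = {x\<in>B. r x \<in> D}"
  shows "sgn2 C (B - C) * tm g r C * tm g r (B - C) = sgn2 D Y * tm g r B"
proof -
  have bij: "bij_betw r B (D \<union> Y)" using r by (simp add: Bij_def)
  have injB: "inj_on r B" using bij by (simp add: bij_betw_def)
  have CB: "C \<subseteq> B" using C by auto
  have rC: "r ` C = D"
  proof
    show "r ` C \<subseteq> D" using C by auto
    show "D \<subseteq> r ` C"
    proof
      fix d assume "d \<in> D"
      have "d \<in> r ` B" using bij \<open>d \<in> D\<close> by (auto simp: bij_betw_def)
      then obtain x where "x \<in> B" "r x = d" by blast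
      thus "d \<in> r ` C" using C \<open>d \<in> D\<close> by auto
    qed
  qed
  have rBC: "r ` (B - C) = Y"
  proof
    show "r ` (B - C) \<subseteq> Y" using C bij by (auto simp: bij_betw_def)
    show "Y \<subseteq> r ` (B - C)"
    proof
      fix y assume "y \<in> Y"
      have "y \<in> r ` B" using bij \<open>y \<in> Y\<close> by (auto simp: bij_betw_def)
      then obtain x where "x \<in> B" "r x = y" by blast
      thus "y \<in> r ` (B - C)" using C \<open>y \<in> Y\<close> dj by auto
    qed
  qed
  have fin: "finite (B \<times> B)" using fB by simp
  define N1 where "N1 = card {(i,j). i \<in> C \<and> j \<in> B - C \<and> i < j \<and> r j < r i}"
  define N2 where "N2 = card {(i,j). i \<in> B - C \<and> j \<in> C \<and> i < j \<and> r j < r i}"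
  define N3 where "N3 = card {(i,j). i \<in> C \<and> j \<in> B - C \<and> j < i \<and> r j < r i}"
  have a: "ninv r B = ninv r C + ninv r (B - C) + N1 + N2"
  proof -
    let ?P = "\<lambda>U V. {(i,j). i \<in> U \<and> j \<in> V \<and> i < j \<and> r j < r i}"
    have eq: "?P B B = ((?P C C \<union> ?P (B-C) (B-C)) \<union> ?P C (B-C)) \<union> ?P (B-C) C"
      using CB by auto
    have f: "\<And>U V. U \<subseteq> B \<Longrightarrow> V \<subseteq> B \<Longrightarrow> finite (?P U V)"
      by (rule finite_subset[OF _ fin]) auto
    have f1: "finite (?P C C)" "finite (?P (B-C) (B-C))" "finite (?P C (B-C))" "finite (?P (B-C) C)"
      using f[OF CB CB] f[OF Diff_subset Diff_subset] f[OF CB Diff_subset] f[OF Diff_subset CB] by auto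
    have "card (?P B B) = card ((?P C C \<union> ?P (B-C) (B-C)) \<union> ?P C (B-C)) + card (?P (B-C) C)"
      unfolding eq by (rule card_Un_disjoint) (use f1 in auto)
    also have "card ((?P C C \<union> ?P (B-C) (B-C)) \<union> ?P C (B-C)) = card (?P C C \<union> ?P (B-C) (B-C)) + card (?P C (B-C))"
      by (rule card_Un_disjoint) (use f1 in auto)
    also have "card (?P C C \<union> ?P (B-C) (B-C)) = card (?P C C) + card (?P (B-C) (B-C))"
      by (rule card_Un_disjoint) (use f1 in auto)
    finally have "card (?P B B) = card (?P C C) + card (?P (B-C) (B-C)) + card (?P C (B-C)) + card (?P (B-C) C)" .
    thus ?thesis unfolding ninv_def N1_def N2_def by simp
  qed
  have b: "card {(s,t). s \<in> C \<and> t \<in> B - C \<and> t < s} = N3 + N2"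
  proof -
    let ?S1 = "{(s,t). s \<in> C \<and> t \<in> B - C \<and> t < s \<and> r t < r s}"
    let ?S2 = "{(s,t). s \<in> C \<and> t \<in> B - C \<and> t < s \<and> r s < r t}"
    have ne: "\<And>s t. s \<in> C \<Longrightarrow> t \<in> B - C \<Longrightarrow> r s \<noteq> r t"
      using rC rBC dj by blast
    have eq: "{(s,t). s \<in> C \<and> t \<in> B - C \<and> t < s} = ?S1 \<union> ?S2"
      using ne by (auto simp: linorder_neq_iff)
    have f1: "finite ?S1" by (rule finite_subset[OF _ fin]) (use CB in auto)
    have f2: "finite ?S2" by (rule finite_subset[OF _ fin]) (use CB in auto)
    have c2: "card ?S2 = N2" unfolding N2_def
      by (rule bij_betw_same_card[of "\<lambda>(s,t). (t,s)"]) (auto simp: bij_betw_def inj_on_def image_def)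
    show ?thesis unfolding eq N3_def using f1 f2 c2 by (subst card_Un_disjoint) auto
  qed
  have c: "card {(d,y). d \<in> D \<and> y \<in> Y \<and> y < d} = N3 + N1"
  proof -
    let ?T = "{(s,t). s \<in> C \<and> t \<in> B - C \<and> r t < r s}"
    have "card {(d,y). d \<in> D \<and> y \<in> Y \<and> y < d} = card ?T"
    proof (rule sym, rule bij_betw_same_card[of "\<lambda>(s,t). (r s, r t)"])
      show "bij_betw (\<lambda>(s,t). (r s, r t)) ?T {(d,y). d \<in> D \<and> y \<in> Y \<and> y < d}"
        unfolding bij_betw_def
      proof
        show "inj_on (\<lambda>(s,t). (r s, r t)) ?T"
          using injB CB by (auto simp: inj_on_def)
        show "(\<lambda>(s,t). (r s, r t)) ` ?T = {(d,y). d \<in> D \<and> y \<in> Y \<and> y < d}"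
        proof
          show "(\<lambda>(s,t). (r s, r t)) ` ?T \<subseteq> {(d,y). d \<in> D \<and> y \<in> Y \<and> y < d}"
            using rC rBC by auto
          show "{(d,y). d \<in> D \<and> y \<in> Y \<and> y < d} \<subseteq> (\<lambda>(s,t). (r s, r t)) ` ?T"
          proof safe
            fix d y assume "d \<in> D" "y \<in> Y" "y < d"
            then obtain s t where "s \<in> C" "r s = d" "t \<in> B - C" "r t = y"
              using rC rBC by blast
            thus "(d, y) \<in> (\<lambda>(s,t). (r s, r t)) ` ?T" using \<open>y < d\<close> by force
          qed
        qed
      qed
    qed
    also have "?T = {(i,j). i \<in> C \<and> j \<in> B - C \<and> j < i \<and> r j < r i} \<union>
                   {(i,j). i \<in> C \<and> j \<in> B - C \<and> i < j \<and> r j < r i}"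
      by (auto simp: not_less_iff_gr_or_eq)
    also have "card \<dots> = N3 + N1" unfolding N3_def N1_def
      by (rule card_Un_disjoint) (rule finite_subset[OF _ fin], use CB in auto)+
    finally show ?thesis .
  qed
  have prod: "(\<Prod>j\<in>B. g (r j) j) = (\<Prod>j\<in>C. g (r j) j) * (\<Prod>j\<in>B - C. g (r j) j)"
    using prod.subset_diff[OF CB fB] by (simp add: mult.commute)
  have "sgn2 C (B - C) * tm g r C * tm g r (B - C) =
      (-1)^(N3 + N2 + ninv r C + ninv r (B - C)) * ((\<Prod>j\<in>C. g (r j) j) * (\<Prod>j\<in>B - C. g (r j) j))"
    unfolding sgn2_def tm_def b by (simp add: power_add algebra_simps)
  also have "N3 + N2 + ninv r C + ninv r (B - C) = (N3 + N1 + ninv r B) - 2 * N1"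
    using a by simp
  also have "(-1::'a)^((N3 + N1 + ninv r B) - 2 * N1) = (-1)^(N3 + N1 + ninv r B)"
  proof -
    have "N3 + N1 + ninv r B = ((N3 + N1 + ninv r B) - 2 * N1) + 2 * N1" using a by simp
    hence "(-1::'a)^(N3 + N1 + ninv r B) = (-1)^((N3 + N1 + ninv r B) - 2 * N1)"
      by (metis neg1_pow_2)
    thus ?thesis by simp
  qed
  also have "(-1::'a)^(N3 + N1 + ninv r B) * ((\<Prod>j\<in>C. g (r j) j) * (\<Prod>j\<in>B - C. g (r j) j))
     = sgn2 D Y * tm g r B"
    unfolding sgn2_def tm_def c prod by (simp add: power_add)
  finally show ?thesis .
qed

lemma split_col:
  fixes g :: "nat \<Rightarrow> nat \<Rightarrow> 'a::comm_ring_1"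
  assumes fB: "finite B" and fD: "finite D" and fY: "finite Y" and dj: "D \<inter> Y = {}"
  shows "(\<Sum>C\<in>Pow B. sgn2 C (B - C) * minor g D C * minor g Y (B - C)) = sgn2 D Y * minor g (D \<union> Y) B"
proof -
  let ?S = "SIGMA C:Pow B. Bij C D \<times> Bij (B - C) Y"
  let ?h = "\<lambda>z. sgn2 (fst z) (B - fst z) * (tm g (fst (snd z)) (fst z) * tm g (snd (snd z)) (B - fst z))"
  have fP: "finite (Pow B)" using fB by simp
  have fS: "\<forall>C\<in>Pow B. finite (Bij C D \<times> Bij (B - C) Y)"
    using fB fD fY by (auto intro!: finite_Bij finite_subset[OF _ fB])
  have "(\<Sum>C\<in>Pow B. sgn2 C (B - C) * minor g D C * minor g Y (B - C)) =
     (\<Sum>C\<in>Pow B. \<Sum>pq\<in>Bij C D \<times> Bij (B - C) Y. ?h (C, pq))"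
  proof (rule sum.cong[OF refl])
    fix C
    have "sgn2 C (B - C) * minor g D C * minor g Y (B - C) = sgn2 C (B - C) * (minor g D C * minor g Y (B - C))"
      by (simp add: mult.assoc)
    also have "minor g D C * minor g Y (B - C) = (\<Sum>p\<in>Bij C D. \<Sum>q\<in>Bij (B - C) Y. tm g p C * tm g q (B - C))"
      unfolding minor_alt by (rule sum_product)
    also have "sgn2 C (B - C) * \<dots> = (\<Sum>p\<in>Bij C D. \<Sum>q\<in>Bij (B - C) Y. sgn2 C (B - C) * (tm g p C * tm g q (B - C)))"
      by (simp add: sum_distrib_left)
    also have "\<dots> = (\<Sum>pq\<in>Bij C D \<times> Bij (B - C) Y. ?h (C, pq))"
      by (simp add: sum.cartesian_product')
    finally show "sgn2 C (B - C) * minor g D C * minor g Y (B - C) = (\<Sum>pq\<in>Bij C D \<times> Bij (B - C) Y. ?h (C, pq))" .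
  qed
  also have "\<dots> = (\<Sum>z\<in>?S. ?h z)"
    using sum.Sigma[OF fP fS, of "\<lambda>C pq. ?h (C, pq)"] by (simp add: case_prod_unfold)
  also have "\<dots> = (\<Sum>r\<in>Bij B (D \<union> Y). sgn2 D Y * tm g r B)"
  proof (rule sym, rule sum.reindex_bij_witness[where
        j = "\<lambda>r. ({x\<in>B. r x \<in> D}, (\<lambda>x. if x \<in> {x\<in>B. r x \<in> D} then r x else x),
                   (\<lambda>x. if x \<in> B - {x\<in>B. r x \<in> D} then r x else x))"
    and i = "\<lambda>z x. if x \<in> fst z then fst (snd z) x else snd (snd z) x"])
    fix r assume r: "r \<in> Bij B (D \<union> Y)"
    show "(\<lambda>x. if x \<in> fst ({x\<in>B. r x \<in> D}, (\<lambda>x. if x \<in> {x\<in>B. r x \<in> D} then r x else x),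
                   (\<lambda>x. if x \<in> B - {x\<in>B. r x \<in> D} then r x else x))
          then fst (snd ({x\<in>B. r x \<in> D}, (\<lambda>x. if x \<in> {x\<in>B. r x \<in> D} then r x else x),
                   (\<lambda>x. if x \<in> B - {x\<in>B. r x \<in> D} then r x else x))) x
          else snd (snd ({x\<in>B. r x \<in> D}, (\<lambda>x. if x \<in> {x\<in>B. r x \<in> D} then r x else x),
                   (\<lambda>x. if x \<in> B - {x\<in>B. r x \<in> D} then r x else x))) x) = r"
      using r by (auto simp: Bij_def fun_eq_iff)
    define C where "C = {x\<in>B. r x \<in> D}"
    have bij: "bij_betw r B (D \<union> Y)" using r by (simp add: Bij_def)
    have CB: "C \<subseteq> B" using C_def by auto
    have rC: "r ` C = D"
    proof
      show "r ` C \<subseteq> D" using C_def by auto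
      show "D \<subseteq> r ` C"
      proof
        fix d assume "d \<in> D"
        have "d \<in> r ` B" using bij \<open>d \<in> D\<close> by (auto simp: bij_betw_def)
        then obtain x where "x \<in> B" "r x = d" by blast
        thus "d \<in> r ` C" using C_def \<open>d \<in> D\<close> by auto
      qed
    qed
    have rBC: "r ` (B - C) = Y"
    proof
      show "r ` (B - C) \<subseteq> Y" using C_def bij by (auto simp: bij_betw_def)
      show "Y \<subseteq> r ` (B - C)"
      proof
        fix y assume "y \<in> Y"
        have "y \<in> r ` B" using bij \<open>y \<in> Y\<close> by (auto simp: bij_betw_def)
        then obtain x where "x \<in> B" "r x = y" by blast
        thus "y \<in> r ` (B - C)" using C_def \<open>y \<in> Y\<close> dj by auto
      qed
    qed
    have b1: "bij_betw r C D" by (rule bij_betw_subset[OF bij CB rC])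
    have b2: "bij_betw r (B - C) Y" by (rule bij_betw_subset[OF bij Diff_subset rBC])
    have "(\<lambda>x. if x \<in> C then r x else x) \<in> Bij C D"
      unfolding Bij_def using b1 by (auto intro: bij_betw_cong[THEN iffD1, OF _ b1])
    moreover have "(\<lambda>x. if x \<in> B - C then r x else x) \<in> Bij (B - C) Y"
      unfolding Bij_def using b2 by (auto intro: bij_betw_cong[THEN iffD1, OF _ b2])
    ultimately show "({x\<in>B. r x \<in> D}, (\<lambda>x. if x \<in> {x\<in>B. r x \<in> D} then r x else x),
                   (\<lambda>x. if x \<in> B - {x\<in>B. r x \<in> D} then r x else x)) \<in> ?S"
      using CB unfolding C_def by auto
    have "?h ({x\<in>B. r x \<in> D}, (\<lambda>x. if x \<in> {x\<in>B. r x \<in> D} then r x else x),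
                   (\<lambda>x. if x \<in> B - {x\<in>B. r x \<in> D} then r x else x)) =
          sgn2 C (B - C) * tm g r C * tm g r (B - C)"
      unfolding C_def[symmetric] using tm_cong[of C "\<lambda>x. if x \<in> C then r x else x" r g]
        tm_cong[of "B - C" "\<lambda>x. if x \<in> B - C then r x else x" r g] by (simp add: mult.assoc)
    also have "\<dots> = sgn2 D Y * tm g r B" by (rule split_term[OF r dj fB C_def])
    finally show "?h ({x\<in>B. r x \<in> D}, (\<lambda>x. if x \<in> {x\<in>B. r x \<in> D} then r x else x),
                   (\<lambda>x. if x \<in> B - {x\<in>B. r x \<in> D} then r x else x)) = sgn2 D Y * tm g r B" .
  next
    fix z assume z: "z \<in> ?S"
    obtain C p q where zz: "z = (C, p, q)" by (cases z) auto
    have CB: "C \<subseteq> B" and p: "p \<in> Bij C D" and q: "q \<in> Bij (B - C) Y" using z zz by auto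
    have pC: "\<And>x. x \<in> C \<Longrightarrow> p x \<in> D" using p by (auto simp: Bij_def bij_betw_def)
    have qC: "\<And>x. x \<in> B - C \<Longrightarrow> q x \<in> Y" using q by (auto simp: Bij_def bij_betw_def)
    have Ceq: "{x\<in>B. (if x \<in> C then p x else q x) \<in> D} = C"
      using pC qC dj CB by auto
    show "({x\<in>B. (\<lambda>x. if x \<in> fst z then fst (snd z) x else snd (snd z) x) x \<in> D},
           (\<lambda>x. if x \<in> {x\<in>B. (\<lambda>x. if x \<in> fst z then fst (snd z) x else snd (snd z) x) x \<in> D}
                then (\<lambda>x. if x \<in> fst z then fst (snd z) x else snd (snd z) x) x else x),
           (\<lambda>x. if x \<in> B - {x\<in>B. (\<lambda>x. if x \<in> fst z then fst (snd z) x else snd (snd z) x) x \<in> D}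
                then (\<lambda>x. if x \<in> fst z then fst (snd z) x else snd (snd z) x) x else x)) = z"
      unfolding zz fst_conv snd_conv Ceq using p q CB by (auto simp: Bij_def fun_eq_iff)
    have bp: "bij_betw (\<lambda>x. if x \<in> C then p x else q x) C D"
      using p by (auto simp: Bij_def intro: bij_betw_cong[THEN iffD1, of C p])
    have bq: "bij_betw (\<lambda>x. if x \<in> C then p x else q x) (B - C) Y"
      using q by (auto simp: Bij_def intro: bij_betw_cong[THEN iffD1, of "B - C" q])
    have "bij_betw (\<lambda>x. if x \<in> C then p x else q x) (C \<union> (B - C)) (D \<union> Y)"
      by (rule bij_betw_combine[OF bp bq dj])
    moreover have "C \<union> (B - C) = B" using CB by auto
    ultimately show "(\<lambda>x. if x \<in> fst z then fst (snd z) x else snd (snd z) x) \<in> Bij B (D \<union> Y)"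
      unfolding zz Bij_def fst_conv snd_conv using q CB by (auto simp: Bij_def)
  qed
  also have "\<dots> = sgn2 D Y * minor g (D \<union> Y) B"
    by (simp add: minor_alt sum_distrib_left)
  finally show ?thesis .
qed

lemma minor_cong:
  assumes "\<And>i j. i \<in> S \<Longrightarrow> j \<in> S' \<Longrightarrow> g i j = h i j"
  shows "minor g S S' = minor h S S'"
  unfolding minor_alt tm_def
proof (rule sum.cong[OF refl])
  fix p assume p: "p \<in> Bij S' S"
  have "\<And>j. j \<in> S' \<Longrightarrow> p j \<in> S" using p by (auto simp: Bij_def bij_betw_def)
  thus "(-1) ^ ninv p S' * (\<Prod>j\<in>S'. g (p j) j) = (-1) ^ ninv p S' * (\<Prod>j\<in>S'. h (p j) j)"
    using assms by (simp cong: prod.cong)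
qed

definition binv :: "nat set \<Rightarrow> nat set \<Rightarrow> (nat \<Rightarrow> nat) \<Rightarrow> nat \<Rightarrow> nat" where
  "binv A B p = (\<lambda>x. if x \<in> B then the_inv_into A p x else x)"

lemma binv:
  assumes p: "p \<in> Bij A B"
  shows "binv A B p \<in> Bij B A" "\<And>x. x \<in> A \<Longrightarrow> binv A B p (p x) = x"
    "\<And>y. y \<in> B \<Longrightarrow> p (binv A B p y) = y" "binv B A (binv A B p) = p"
proof -
  have bij: "bij_betw p A B" and fx: "\<And>x. x \<notin> A \<Longrightarrow> p x = x" using p by (auto simp: Bij_def)
  have inj: "inj_on p A" and im: "p ` A = B" using bij by (auto simp: bij_betw_def)
  have b2: "bij_betw (the_inv_into A p) B A" using bij_betw_the_inv_into[OF bij] .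
  show b: "binv A B p \<in> Bij B A"
    unfolding Bij_def binv_def using b2 by (auto intro: bij_betw_cong[THEN iffD1, OF _ b2])
  show i1: "\<And>x. x \<in> A \<Longrightarrow> binv A B p (p x) = x"
    unfolding binv_def using inj im by (auto simp: the_inv_into_f_f)
  show i2: "\<And>y. y \<in> B \<Longrightarrow> p (binv A B p y) = y"
    unfolding binv_def using inj im by (auto simp: f_the_inv_into_f)
  have injq: "inj_on (binv A B p) B" using b by (auto simp: Bij_def bij_betw_def)
  show "binv B A (binv A B p) = p"
  proof
    fix x show "binv B A (binv A B p) x = p x"
    proof (cases "x \<in> A")
      case True
      have "p x \<in> B" using True im by auto
      moreover have "binv A B p (p x) = x" using i1 True .
      ultimately have "the_inv_into B (binv A B p) x = p x"
        using the_inv_into_f_f[OF injq, of "p x"] by simp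
      thus ?thesis using True by (simp add: binv_def)
    next
      case False thus ?thesis by (simp add: binv_def fx)
    qed
  qed
qed

lemma Bij_maps: "p \<in> Bij A B \<Longrightarrow> x \<in> A \<Longrightarrow> p x \<in> B"
  by (auto simp: Bij_def bij_betw_def)

lemma Bij_inj: "p \<in> Bij A B \<Longrightarrow> x \<in> A \<Longrightarrow> y \<in> A \<Longrightarrow> p x = p y \<Longrightarrow> x = y"
  by (auto simp: Bij_def bij_betw_def inj_on_def)

lemma minor_transpose:
  fixes g :: "nat \<Rightarrow> nat \<Rightarrow> 'a::comm_ring_1"
  assumes fS: "finite S" and fS': "finite S'"
  shows "minor g S S' = minor (\<lambda>i j. g j i) S' S"
  unfolding minor_alt
proof (rule sum.reindex_bij_witness[where j = "binv S' S" and i = "binv S S'"])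
  fix p assume p: "p \<in> Bij S' S"
  show "binv S S' (binv S' S p) = p" using binv(4)[OF p] .
  show "binv S' S p \<in> Bij S S'" using binv(1)[OF p] .
  let ?q = "binv S' S p"
  have q: "?q \<in> Bij S S'" using binv(1)[OF p] .
  have "ninv ?q S = ninv p S'"
    unfolding ninv_def
  proof (rule bij_betw_same_card[of "\<lambda>(k,l). (?q l, ?q k)"])
    show "bij_betw (\<lambda>(k,l). (?q l, ?q k)) {(i, j). i \<in> S \<and> j \<in> S \<and> i < j \<and> ?q j < ?q i}
        {(i, j). i \<in> S' \<and> j \<in> S' \<and> i < j \<and> p j < p i}"
      unfolding bij_betw_def
    proof
      show "inj_on (\<lambda>(k,l). (?q l, ?q k)) {(i, j). i \<in> S \<and> j \<in> S \<and> i < j \<and> ?q j < ?q i}"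
        using Bij_inj[OF q] by (auto simp: inj_on_def)
      show "(\<lambda>(k,l). (?q l, ?q k)) ` {(i, j). i \<in> S \<and> j \<in> S \<and> i < j \<and> ?q j < ?q i} =
        {(i, j). i \<in> S' \<and> j \<in> S' \<and> i < j \<and> p j < p i}"
      proof
        show "(\<lambda>(k,l). (?q l, ?q k)) ` {(i, j). i \<in> S \<and> j \<in> S \<and> i < j \<and> ?q j < ?q i}
            \<subseteq> {(i, j). i \<in> S' \<and> j \<in> S' \<and> i < j \<and> p j < p i}"
          using Bij_maps[OF q] binv(3)[OF p] by auto
        show "{(i, j). i \<in> S' \<and> j \<in> S' \<and> i < j \<and> p j < p i} \<subseteq>
            (\<lambda>(k,l). (?q l, ?q k)) ` {(i, j). i \<in> S \<and> j \<in> S \<and> i < j \<and> ?q j < ?q i}"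
        proof safe
          fix i j assume ij: "i \<in> S'" "j \<in> S'" "i < j" "p j < p i"
          have "(p j, p i) \<in> {(i, j). i \<in> S \<and> j \<in> S \<and> i < j \<and> ?q j < ?q i}"
            using ij Bij_maps[OF p] binv(2)[OF p] by auto
          moreover have "(i, j) = (\<lambda>(k,l). (?q l, ?q k)) (p j, p i)" using binv(2)[OF p] ij by auto
          ultimately show "(i, j) \<in> (\<lambda>(k,l). (?q l, ?q k)) ` {(i, j). i \<in> S \<and> j \<in> S \<and> i < j \<and> ?q j < ?q i}"
            by blast
        qed
      qed
    qed
  qed
  moreover have "(\<Prod>j\<in>S. g j (?q j)) = (\<Prod>j\<in>S'. g (p j) j)"
  proof -
    have bp: "bij_betw p S' S" using p by (simp add: Bij_def)
    have "(\<Prod>j\<in>S. g j (?q j)) = (\<Prod>j\<in>S'. g (p j) (?q (p j)))"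
      using prod.reindex_bij_betw[OF bp, of "\<lambda>j. g j (?q j)"] by simp
    also have "\<dots> = (\<Prod>j\<in>S'. g (p j) j)" using binv(2)[OF p] by simp
    finally show ?thesis .
  qed
  ultimately show "tm (\<lambda>i j. g j i) (binv S' S p) S = tm g p S'" by (simp add: tm_def)
next
  fix q assume q: "q \<in> Bij S S'"
  show "binv S' S (binv S S' q) = q" using binv(4)[OF q] .
  show "binv S S' q \<in> Bij S' S" using binv(1)[OF q] .
qed

lemma sgn2_unit: "sgn2 D Y * x = 0 \<Longrightarrow> x = (0::'a::comm_ring_1)"
  by (metis mult.assoc mult_1 mult_zero_right sgn2_sq)

lemma ninv_2:
  assumes "x < y"
  shows "ninv p {x, y} = (if p y < p x then 1 else 0)"
proof -
  have "{(i, j). i \<in> {x, y} \<and> j \<in> {x, y} \<and> i < j \<and> p j < p i} = (if p y < p x then {(x,y)} else {})"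
    using assms by auto
  thus ?thesis by (simp add: ninv_def)
qed

lemma minor_2rows:
  fixes g :: "nat \<Rightarrow> nat \<Rightarrow> 'a::comm_ring_1"
  assumes cc: "c < c'" and rows: "\<And>j. g c j = g c' j" and fC: "finite C"
  shows "minor g {c, c'} C = 0"
proof (cases "card C = 2")
  case False
  thus ?thesis using minor_card[OF fC, of "{c,c'}"] cc by simp
next
  case True
  then obtain x0 y0 where C0: "C = {x0, y0}" and ne0: "x0 \<noteq> y0"
    by (auto simp: card_2_iff)
  obtain x y where C: "C = {x, y}" and xy: "x < y"
  proof (cases "x0 < y0")
    case True thus ?thesis using that C0 by blast
  next
    case False thus ?thesis using that[of y0 x0] C0 ne0 by (auto simp: insert_commute)
  qed
  define p1 where "p1 = (\<lambda>z. if z = x then c else if z = y then c' else z)"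
  define p2 where "p2 = (\<lambda>z. if z = x then c' else if z = y then c else z)"
  have B: "Bij C {c, c'} = {p1, p2}"
  proof
    show "Bij C {c, c'} \<subseteq> {p1, p2}"
    proof
      fix p assume p: "p \<in> Bij C {c, c'}"
      have px: "p x \<in> {c, c'}" and py: "p y \<in> {c, c'}" using Bij_maps[OF p] C by auto
      have ne: "p x \<noteq> p y" using Bij_inj[OF p, of x y] C xy by auto
      have out: "\<And>z. z \<noteq> x \<Longrightarrow> z \<noteq> y \<Longrightarrow> p z = z" using p C by (auto simp: Bij_def)
      show "p \<in> {p1, p2}"
      proof (cases "p x = c")
        case True
        hence "p y = c'" using py ne by auto
        hence "p = p1" using True out by (auto simp: p1_def fun_eq_iff)
        thus ?thesis by simp
      next
        case False
        hence "p x = c'" "p y = c" using px py ne by auto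
        hence "p = p2" using out by (auto simp: p2_def fun_eq_iff)
        thus ?thesis by simp
      qed
    qed
    have x1: "p1 x = c" "p1 y = c'" "p2 x = c'" "p2 y = c" using xy by (auto simp: p1_def p2_def)
    have "bij_betw p1 {x, y} {c, c'}" unfolding bij_betw_def using x1 xy cc by auto
    moreover have "bij_betw p2 {x, y} {c, c'}" unfolding bij_betw_def using x1 xy cc by auto
    ultimately show "{p1, p2} \<subseteq> Bij C {c, c'}"
      unfolding C Bij_def by (auto simp: p1_def p2_def)
  qed
  have ne: "p1 \<noteq> p2" using cc by (auto simp: p1_def p2_def fun_eq_iff)
  have "minor g {c, c'} C = tm g p1 C + tm g p2 C"
    unfolding minor_alt B using ne by simp
  also have "\<dots> = 0"
    unfolding tm_def C using xy cc rows ninv_2[OF xy, of p1] ninv_2[OF xy, of p2]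
    by (simp add: p1_def p2_def)
  finally show ?thesis .
qed

lemma minor_eq_rows:
  fixes g :: "nat \<Rightarrow> nat \<Rightarrow> 'a::comm_ring_1"
  assumes fS: "finite S" and fB: "finite B" and c: "c \<in> S" "c' \<in> S" "c < c'"
    and rows: "\<And>j. g c j = g c' j"
  shows "minor g S B = 0"
proof -
  let ?D = "{c, c'}" and ?Y = "S - {c, c'}"
  have "sgn2 ?D ?Y * minor g (?D \<union> ?Y) B = (\<Sum>C\<in>Pow B. sgn2 C (B - C) * minor g ?D C * minor g ?Y (B - C))"
    by (rule split_col[symmetric]) (use fB fS in auto)
  also have "\<dots> = 0"
  proof (rule sum.neutral, rule ballI)
    fix C assume "C \<in> Pow B"
    hence "finite C" using fB finite_subset by auto
    hence "minor g {c, c'} C = 0" using minor_2rows[OF c(3)] rows by blast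
    thus "sgn2 C (B - C) * minor g {c, c'} C * minor g (S - {c, c'}) (B - C) = 0" by simp
  qed
  finally have "sgn2 ?D ?Y * minor g S B = 0" using c by (simp add: insert_absorb Un_absorb1)
  thus ?thesis by (rule sgn2_unit)
qed

lemma minor_shift:
  fixes g :: "nat \<Rightarrow> nat \<Rightarrow> 'a::comm_ring_1"
  assumes "\<And>i j. h (i + M) j = g i j"
  shows "minor h ((\<lambda>y. y + M) ` Y) C = minor g Y C"
  unfolding minor_alt
proof (rule sum.reindex_bij_witness[where j = "\<lambda>p x. if x \<in> C then p x - M else x"
      and i = "\<lambda>p x. if x \<in> C then p x + M else x"])
  fix p assume p: "p \<in> Bij C ((\<lambda>y. y + M) ` Y)"
  have pm: "\<And>x. x \<in> C \<Longrightarrow> M \<le> p x \<and> p x - M \<in> Y"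
  proof -
    fix x assume "x \<in> C"
    then obtain y where "y \<in> Y" "p x = y + M" using Bij_maps[OF p] by blast
    thus "M \<le> p x \<and> p x - M \<in> Y" by simp
  qed
  show "(\<lambda>x. if x \<in> C then (if x \<in> C then p x - M else x) + M else x) = p"
    using pm p by (auto simp: fun_eq_iff Bij_def)
  show "(\<lambda>x. if x \<in> C then p x - M else x) \<in> Bij C Y"
  proof -
    have "bij_betw (\<lambda>y. y - M) ((\<lambda>y. y + M) ` Y) Y"
      by (auto simp: bij_betw_def inj_on_def image_def)
    hence "bij_betw ((\<lambda>y. y - M) \<circ> p) C Y"
      using p by (auto simp: Bij_def intro: bij_betw_trans)
    thus ?thesis unfolding Bij_def by (auto intro: bij_betw_cong[THEN iffD1] simp: comp_def)
  qed
  have "ninv (\<lambda>x. if x \<in> C then p x - M else x) C = ninv p C"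
  proof -
    have pmo: "\<And>x y. x \<in> C \<Longrightarrow> y \<in> C \<Longrightarrow> (p x - M < p y - M) = (p x < p y)"
      using pm by fastforce
    show ?thesis unfolding ninv_def using pmo by (intro arg_cong[where f=card]) auto
  qed
  moreover have "(\<Prod>j\<in>C. g ((\<lambda>x. if x \<in> C then p x - M else x) j) j) = (\<Prod>j\<in>C. h (p j) j)"
    using pm assms by (intro prod.cong) (auto, metis le_add_diff_inverse2)
  ultimately show "tm g (\<lambda>x. if x \<in> C then p x - M else x) C = tm h p C" by (simp add: tm_def)
next
  fix q assume q: "q \<in> Bij C Y"
  show "(\<lambda>x. if x \<in> C then (if x \<in> C then q x + M else x) - M else x) = q"
    using q by (auto simp: fun_eq_iff Bij_def)
  show "(\<lambda>x. if x \<in> C then q x + M else x) \<in> Bij C ((\<lambda>y. y + M) ` Y)"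
  proof -
    have "bij_betw (\<lambda>y. y + M) Y ((\<lambda>y. y + M) ` Y)"
      by (auto simp: bij_betw_def inj_on_def)
    hence "bij_betw ((\<lambda>y. y + M) \<circ> q) C ((\<lambda>y. y + M) ` Y)"
      using q by (auto simp: Bij_def intro: bij_betw_trans)
    thus ?thesis unfolding Bij_def by (auto intro: bij_betw_cong[THEN iffD1] simp: comp_def)
  qed
qed

lemma vanish_col:
  fixes g :: "nat \<Rightarrow> nat \<Rightarrow> 'a::comm_ring_1"
  assumes fB: "finite B" and fD: "finite D" and fY: "finite Y" and ov: "D \<inter> Y \<noteq> {}"
  shows "(\<Sum>C\<in>Pow B. sgn2 C (B - C) * minor g D C * minor g Y (B - C)) = 0"
proof -
  define M where "M = Suc (Max (D \<union> Y))"
  have DM: "\<And>i. i \<in> D \<union> Y \<Longrightarrow> i < M" unfolding M_def using fD fY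
    by (simp add: le_imp_less_Suc)
  define h where "h = (\<lambda>i j. if M \<le> i then g (i - M) j else g i j)"
  let ?Y = "(\<lambda>y. y + M) ` Y"
  have "(\<Sum>C\<in>Pow B. sgn2 C (B - C) * minor g D C * minor g Y (B - C)) =
        (\<Sum>C\<in>Pow B. sgn2 C (B - C) * minor h D C * minor h ?Y (B - C))"
  proof (rule sum.cong[OF refl])
    fix C
    have "minor h D C = minor g D C"
    proof (rule minor_cong)
      fix i j assume "i \<in> D"
      hence "i < M" using DM by blast
      thus "h i j = g i j" by (simp add: h_def)
    qed
    moreover have "minor h ?Y (B - C) = minor g Y (B - C)" by (rule minor_shift) (simp add: h_def)
    ultimately show "sgn2 C (B - C) * minor g D C * minor g Y (B - C) =
        sgn2 C (B - C) * minor h D C * minor h ?Y (B - C)" by simp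
  qed
  also have "\<dots> = sgn2 D ?Y * minor h (D \<union> ?Y) B"
    by (rule split_col) (use fB fD fY DM in auto)
  also have "minor h (D \<union> ?Y) B = 0"
  proof -
    obtain c where c: "c \<in> D" "c \<in> Y" using ov by auto
    have cM: "c < M" using DM c by blast
    show ?thesis
      by (rule minor_eq_rows[where c=c and c'="c + M"]) (use c fD fY fB cM in \<open>auto simp: h_def\<close>)
  qed
  finally show ?thesis by simp
qed

lemma split_row:
  fixes g :: "nat \<Rightarrow> nat \<Rightarrow> 'a::comm_ring_1"
  assumes fX: "finite X" and fA: "finite A" and fC: "finite C"
  shows "(\<Sum>A'\<in>Pow X. sgn2 A' (X - A') * minor g A' A * minor g (X - A') C) =
     (if A \<inter> C = {} then sgn2 A C * minor g X (A \<union> C) else 0)"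
proof -
  let ?h = "\<lambda>i j. g j i"
  have "(\<Sum>A'\<in>Pow X. sgn2 A' (X - A') * minor g A' A * minor g (X - A') C) =
     (\<Sum>A'\<in>Pow X. sgn2 A' (X - A') * minor ?h A A' * minor ?h C (X - A'))"
    using fX fA fC by (intro sum.cong refl) (auto simp: minor_transpose[of _ A] minor_transpose[of "X - _" C] dest: finite_subset)
  also have "\<dots> = (if A \<inter> C = {} then sgn2 A C * minor ?h (A \<union> C) X else 0)"
    using split_col[OF fX fA fC, of ?h] vanish_col[OF fX fA fC, of ?h] by auto
  also have "\<dots> = (if A \<inter> C = {} then sgn2 A C * minor g X (A \<union> C) else 0)"
    using minor_transpose[of X "A \<union> C" g] fX fA fC by simp
  finally show ?thesis .
qed

lemma split_col':
  fixes g :: "nat \<Rightarrow> nat \<Rightarrow> 'a::comm_ring_1"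
  assumes fB: "finite B" and fD: "finite D" and fY: "finite Y"
  shows "(\<Sum>C\<in>Pow B. sgn2 C (B - C) * minor g D C * minor g Y (B - C)) =
    (if D \<inter> Y = {} then sgn2 D Y * minor g (D \<union> Y) B else 0)"
  using split_col[OF assms] vanish_col[OF assms] by auto

lemma idx_mem: "S \<in> idx n k \<longleftrightarrow> S \<subseteq> {..<n} \<and> card S = k"
  by (simp add: idx_def)

lemma idx_finite: "S \<in> idx n k \<Longrightarrow> finite S"
  by (auto simp: idx_def intro: finite_subset)

lemma finite_idx: "finite (idx n k)"
  unfolding idx_def by (rule finite_subset[of _ "Pow {..<n}"]) auto

lemma diff_eq_iff: "C \<subseteq> B \<Longrightarrow> (Y = B - C) = (C = B - Y \<and> Y \<subseteq> B)"
  by blast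

lemma delta_basis_closed:
  assumes "finite B"
  shows "delta_basis t A B (X,Y) = (if Y \<subseteq> B \<and> card (B - Y) = t \<and> A \<inter> (B - Y) = {} \<and> X = A \<union> (B - Y)
     then sgn2 (B - Y) Y * sgn2 A (B - Y) else (0::'a::comm_ring_1))"
proof -
  have fin: "finite {C. C \<subseteq> B \<and> card C = t}" using assms by (auto intro: finite_subset[of _ "Pow B"])
  have "delta_basis t A B (X,Y) = (\<Sum>C\<in>{C. C \<subseteq> B \<and> card C = t}. if C = B - Y then
      (if Y \<subseteq> B \<and> A \<inter> C = {} \<and> X = A \<union> C then sgn2 C (B - C) * sgn2 A C else (0::'a)) else 0)"
    unfolding delta_basis_def prod.case
  proof (intro sum.cong refl, goal_cases)
    case (1 C)
    hence "C \<subseteq> B" by simp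
    thus ?case using diff_eq_iff[of C B Y] by auto
  qed
  also have "\<dots> = (if B - Y \<in> {C. C \<subseteq> B \<and> card C = t} then
      (if Y \<subseteq> B \<and> A \<inter> (B - Y) = {} \<and> X = A \<union> (B - Y) then sgn2 (B - Y) (B - (B - Y)) * sgn2 A (B - Y) else 0) else 0)"
    by (rule sum.delta[OF fin])
  also have "\<dots> = (if Y \<subseteq> B \<and> card (B - Y) = t \<and> A \<inter> (B - Y) = {} \<and> X = A \<union> (B - Y)
     then sgn2 (B - Y) Y * sgn2 A (B - Y) else 0)"
    by (auto simp: double_diff)
  finally show ?thesis .
qed

lemma theta_basis_closed:
  assumes "finite X"
  shows "theta_basis a X Y (A',B') = (if A' \<subseteq> X \<and> card A' = a \<and> (X - A') \<inter> Y = {} \<and> B' = (X - A') \<union> Y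
     then sgn2 A' (X - A') * sgn2 (X - A') Y else (0::'a::comm_ring_1))"
proof -
  have fin: "finite {A. A \<subseteq> X \<and> card A = a}" using assms by (auto intro: finite_subset[of _ "Pow X"])
  have "theta_basis a X Y (A',B') = (\<Sum>A\<in>{A. A \<subseteq> X \<and> card A = a}. if A = A' then
      (if (X - A) \<inter> Y = {} \<and> B' = (X - A) \<union> Y then sgn2 A (X - A) * sgn2 (X - A) Y else (0::'a)) else 0)"
    unfolding theta_basis_def prod.case by (intro sum.cong refl) auto
  also have "\<dots> = (if A' \<in> {A. A \<subseteq> X \<and> card A = a} then
      (if (X - A') \<inter> Y = {} \<and> B' = (X - A') \<union> Y then sgn2 A' (X - A') * sgn2 (X - A') Y else 0) else 0)"
    by (rule sum.delta[OF fin])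
  also have "\<dots> = (if A' \<subseteq> X \<and> card A' = a \<and> (X - A') \<inter> Y = {} \<and> B' = (X - A') \<union> Y
     then sgn2 A' (X - A') * sgn2 (X - A') Y else 0)"
    by auto
  finally show ?thesis .
qed

lemma delta_basis_supp:
  assumes A: "A \<in> idx n a" and B: "B \<in> idx n b" and t: "t \<le> b"
    and nz: "delta_basis t A B (X,Y) \<noteq> (0::'a::comm_ring_1)"
  shows "(X,Y) \<in> idx n (a + t) \<times> idx n (b - t)"
proof -
  have fB: "finite B" and fA: "finite A" using A B idx_finite by auto
  have c: "Y \<subseteq> B" "card (B - Y) = t" "A \<inter> (B - Y) = {}" "X = A \<union> (B - Y)"
    using nz delta_basis_closed[OF fB, of t A X Y] by (auto split: if_splits)
  have "card X = a + t" using c fA fB A by (simp add: card_Un_disjoint idx_mem)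
  moreover have "card Y = b - t"
    using c fB B card_Diff_subset[OF finite_subset[OF c(1) fB] c(1)] by (auto simp: idx_mem double_diff)
  ultimately show ?thesis using c A B by (auto simp: idx_mem)
qed

lemma theta_basis_supp:
  assumes X: "X \<in> idx n (a + t)" and Y: "Y \<in> idx n (b - t)" and t: "t \<le> b"
    and nz: "theta_basis a X Y (A',B') \<noteq> (0::'a::comm_ring_1)"
  shows "(A',B') \<in> idx n a \<times> idx n b"
proof -
  have fX: "finite X" and fY: "finite Y" using X Y idx_finite by auto
  have c: "A' \<subseteq> X" "card A' = a" "(X - A') \<inter> Y = {}" "B' = (X - A') \<union> Y"
    using nz theta_basis_closed[OF fX, of a Y A' B'] by (auto split: if_splits)
  have "card (X - A') = t" using c X card_Diff_subset[OF finite_subset[OF c(1) fX] c(1)] by (simp add: idx_mem)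
  hence "card B' = b" using c fX fY Y t by (simp add: card_Un_disjoint idx_mem)
  thus ?thesis using c X Y by (auto simp: idx_mem)
qed

lemma delta_lhs:
  fixes h :: "nat set \<times> nat set \<Rightarrow> 'a::comm_ring_1"
  assumes A: "A \<in> idx n a" and B: "B \<in> idx n b" and t: "t \<le> b"
  shows "(\<Sum>P\<in>idx n (a+t) \<times> idx n (b-t). h P * delta_basis t A B P) =
    (\<Sum>C\<in>{C\<in>Pow B. card C = t \<and> A \<inter> C = {}}. h (A \<union> C, B - C) * (sgn2 C (B - C) * sgn2 A C))"
proof -
  let ?J = "{C\<in>Pow B. card C = t \<and> A \<inter> C = {}}"
  let ?phi = "\<lambda>C. (A \<union> C, B - C)"
  have fA: "finite A" and fB: "finite B" using A B idx_finite by auto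
  have sub: "?phi ` ?J \<subseteq> idx n (a+t) \<times> idx n (b-t)"
  proof
    fix P assume "P \<in> ?phi ` ?J"
    then obtain C where C: "C \<subseteq> B" "card C = t" "A \<inter> C = {}" and P: "P = ?phi C" by auto
    have "card (A \<union> C) = a + t" using C fA fB A by (simp add: card_Un_disjoint idx_mem finite_subset)
    moreover have "card (B - C) = b - t" using C B fB by (simp add: card_Diff_subset finite_subset idx_mem)
    ultimately show "P \<in> idx n (a+t) \<times> idx n (b-t)" using P C A B by (auto simp: idx_mem)
  qed
  have "(\<Sum>P\<in>idx n (a+t) \<times> idx n (b-t). h P * delta_basis t A B P) =
        (\<Sum>P\<in>?phi ` ?J. h P * delta_basis t A B P)"
  proof (rule sum.mono_neutral_right[OF _ sub])
    show "finite (idx n (a + t) \<times> idx n (b - t))" using finite_idx by simp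
    show "\<forall>P\<in>idx n (a + t) \<times> idx n (b - t) - ?phi ` ?J. h P * delta_basis t A B P = 0"
    proof
      fix P assume P: "P \<in> idx n (a + t) \<times> idx n (b - t) - ?phi ` ?J"
      obtain X Y where XY: "P = (X,Y)" by (cases P)
      show "h P * delta_basis t A B P = 0"
      proof (rule ccontr)
        assume "h P * delta_basis t A B P \<noteq> 0"
        hence "delta_basis t A B (X,Y) \<noteq> (0::'a)" using XY by auto
        hence c: "Y \<subseteq> B" "card (B - Y) = t" "A \<inter> (B - Y) = {}" "X = A \<union> (B - Y)"
          using delta_basis_closed[OF fB, of t A X Y] by (auto split: if_splits)
        hence "P = ?phi (B - Y)" "B - Y \<in> ?J" using XY by (auto simp: double_diff)
        thus False using P by auto
      qed
    qed
  qed
  also have "\<dots> = (\<Sum>C\<in>?J. h (?phi C) * delta_basis t A B (?phi C))"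
    by (rule sum.reindex_cong[where l="?phi"]) (auto simp: inj_on_def double_diff)
  also have "\<dots> = (\<Sum>C\<in>?J. h (A \<union> C, B - C) * (sgn2 C (B - C) * sgn2 A C))"
  proof (rule sum.cong[OF refl])
    fix C assume "C \<in> ?J"
    hence "C \<subseteq> B" "card C = t" "A \<inter> C = {}" by auto
    thus "h (?phi C) * delta_basis t A B (?phi C) = h (A \<union> C, B - C) * (sgn2 C (B - C) * sgn2 A C)"
      using delta_basis_closed[OF fB, of t A "A \<union> C" "B - C", where 'a='a] by (auto simp: double_diff)
  qed
  finally show ?thesis .
qed

lemma delta_rhs:
  fixes h :: "nat set \<times> nat set \<Rightarrow> 'a::comm_ring_1"
  assumes X: "X \<in> idx n (a+t)" and Y: "Y \<in> idx n (b-t)" and t: "t \<le> b"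
  shows "(\<Sum>P\<in>idx n a \<times> idx n b. h P * delta_basis t (fst P) (snd P) (X,Y)) =
    (\<Sum>A'\<in>{A'\<in>Pow X. card A' = a \<and> (X - A') \<inter> Y = {}}. h (A', Y \<union> (X - A')) * (sgn2 (X - A') Y * sgn2 A' (X - A')))"
proof -
  let ?J = "{A'\<in>Pow X. card A' = a \<and> (X - A') \<inter> Y = {}}"
  let ?psi = "\<lambda>A'. (A', Y \<union> (X - A'))"
  have fX: "finite X" and fY: "finite Y" using X Y idx_finite by auto
  have cXA: "\<And>A'. A' \<subseteq> X \<Longrightarrow> card A' = a \<Longrightarrow> card (X - A') = t"
    using X fX by (simp add: card_Diff_subset finite_subset idx_mem)
  have sub: "?psi ` ?J \<subseteq> idx n a \<times> idx n b"
  proof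
    fix P assume "P \<in> ?psi ` ?J"
    then obtain A' where C: "A' \<subseteq> X" "card A' = a" "(X - A') \<inter> Y = {}" and P: "P = ?psi A'" by auto
    have "card (Y \<union> (X - A')) = b" using C cXA[OF C(1,2)] fX fY Y t
      by (subst card_Un_disjoint) (auto simp: idx_mem)
    thus "P \<in> idx n a \<times> idx n b" using P C X Y by (auto simp: idx_mem)
  qed
  have "(\<Sum>P\<in>idx n a \<times> idx n b. h P * delta_basis t (fst P) (snd P) (X,Y)) =
        (\<Sum>P\<in>?psi ` ?J. h P * delta_basis t (fst P) (snd P) (X,Y))"
  proof (rule sum.mono_neutral_right[OF _ sub])
    show "finite (idx n a \<times> idx n b)" using finite_idx by simp
    show "\<forall>P\<in>idx n a \<times> idx n b - ?psi ` ?J. h P * delta_basis t (fst P) (snd P) (X,Y) = 0"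
    proof
      fix P assume P: "P \<in> idx n a \<times> idx n b - ?psi ` ?J"
      obtain A' B' where AB: "P = (A',B')" by (cases P)
      have fB': "finite B'" using P AB idx_finite by auto
      show "h P * delta_basis t (fst P) (snd P) (X,Y) = 0"
      proof (rule ccontr)
        assume "h P * delta_basis t (fst P) (snd P) (X,Y) \<noteq> 0"
        hence "delta_basis t A' B' (X,Y) \<noteq> (0::'a)" using AB by auto
        hence c: "Y \<subseteq> B'" "card (B' - Y) = t" "A' \<inter> (B' - Y) = {}" "X = A' \<union> (B' - Y)"
          using delta_basis_closed[OF fB', of t A' X Y] by (auto split: if_splits)
        have "card A' = a" using P AB by (auto simp: idx_mem)
        hence "P = ?psi A'" "A' \<in> ?J" using AB c by auto
        thus False using P by auto
      qed
    qed
  qed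
  also have "\<dots> = (\<Sum>A'\<in>?J. h (?psi A') * delta_basis t A' (Y \<union> (X - A')) (X,Y))"
    by (rule sum.reindex_cong[where l="?psi"]) (auto simp: inj_on_def)
  also have "\<dots> = (\<Sum>A'\<in>?J. h (A', Y \<union> (X - A')) * (sgn2 (X - A') Y * sgn2 A' (X - A')))"
  proof (rule sum.cong[OF refl])
    fix A' assume "A' \<in> ?J"
    hence c: "A' \<subseteq> X" "card A' = a" "(X - A') \<inter> Y = {}" by auto
    have e: "Y \<union> (X - A') - Y = X - A'" using c by auto
    show "h (?psi A') * delta_basis t A' (Y \<union> (X - A')) (X,Y) = h (A', Y \<union> (X - A')) * (sgn2 (X - A') Y * sgn2 A' (X - A'))"
      using delta_basis_closed[of "Y \<union> (X - A')" t A' X Y, where 'a='a] fX fY c cXA[OF c(1,2)] e by (auto simp: Un_absorb1)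
  qed
  finally show ?thesis .
qed

lemma delta_mid:
  fixes g :: "nat \<Rightarrow> nat \<Rightarrow> 'a::comm_ring_1"
  assumes fA: "finite A" and fB: "finite B" and fX: "finite X" and fY: "finite Y"
    and cA: "card A = a" and cX: "card X = a + t"
  shows "(\<Sum>C\<in>{C\<in>Pow B. card C = t \<and> A \<inter> C = {}}. minor g X (A \<union> C) * minor g Y (B - C) * (sgn2 C (B - C) * sgn2 A C)) =
    (\<Sum>A'\<in>{A'\<in>Pow X. card A' = a \<and> (X - A') \<inter> Y = {}}. minor g A' A * minor g (Y \<union> (X - A')) B * (sgn2 (X - A') Y * sgn2 A' (X - A')))"
proof -
  have fPB: "finite (Pow B)" and fPX: "finite (Pow X)" using fB fX by auto
  have "(\<Sum>C\<in>{C\<in>Pow B. card C = t \<and> A \<inter> C = {}}. minor g X (A \<union> C) * minor g Y (B - C) * (sgn2 C (B - C) * sgn2 A C)) =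
     (\<Sum>C\<in>Pow B. if card C = t then sgn2 C (B - C) * minor g Y (B - C) *
        (if A \<inter> C = {} then sgn2 A C * minor g X (A \<union> C) else 0) else 0)"
    unfolding sum.inter_filter[OF fPB] by (intro sum.cong refl) (auto simp: ac_simps)
  also have "\<dots> = (\<Sum>C\<in>Pow B. if card C = t then sgn2 C (B - C) * minor g Y (B - C) *
        (\<Sum>A'\<in>Pow X. sgn2 A' (X - A') * minor g A' A * minor g (X - A') C) else 0)"
  proof (intro sum.cong refl)
    fix C assume "C \<in> Pow B"
    hence "finite C" using fB finite_subset by auto
    thus "(if card C = t then sgn2 C (B - C) * minor g Y (B - C) *
        (if A \<inter> C = {} then sgn2 A C * minor g X (A \<union> C) else 0) else 0) =
       (if card C = t then sgn2 C (B - C) * minor g Y (B - C) *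
        (\<Sum>A'\<in>Pow X. sgn2 A' (X - A') * minor g A' A * minor g (X - A') C) else 0)"
      using split_row[OF fX fA, of C g] by simp
  qed
  also have "\<dots> = (\<Sum>C\<in>Pow B. \<Sum>A'\<in>Pow X. if card C = t then sgn2 C (B - C) * minor g Y (B - C) *
        (sgn2 A' (X - A') * minor g A' A * minor g (X - A') C) else 0)"
    by (intro sum.cong refl) (auto simp: sum_distrib_left)
  also have "\<dots> = (\<Sum>A'\<in>Pow X. \<Sum>C\<in>Pow B. if card C = t then sgn2 C (B - C) * minor g Y (B - C) *
        (sgn2 A' (X - A') * minor g A' A * minor g (X - A') C) else 0)"
    by (rule sum.swap)
  also have "\<dots> = (\<Sum>A'\<in>Pow X. if card A' = a then sgn2 A' (X - A') * minor g A' A *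
        (if (X - A') \<inter> Y = {} then sgn2 (X - A') Y * minor g ((X - A') \<union> Y) B else 0) else 0)"
  proof (rule sum.cong[OF refl])
    fix A' assume A': "A' \<in> Pow X"
    have fA': "finite A'" using A' fX finite_subset by auto
    show "(\<Sum>C\<in>Pow B. if card C = t then sgn2 C (B - C) * minor g Y (B - C) *
        (sgn2 A' (X - A') * minor g A' A * minor g (X - A') C) else 0) =
      (if card A' = a then sgn2 A' (X - A') * minor g A' A *
        (if (X - A') \<inter> Y = {} then sgn2 (X - A') Y * minor g ((X - A') \<union> Y) B else 0) else 0)"
    proof (cases "card A' = a")
      case False
      hence m0: "minor g A' A = 0" using minor_card[OF fA, of A' g] cA by simp
      have "\<forall>C\<in>Pow B. (if card C = t then sgn2 C (B - C) * minor g Y (B - C) *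
        (sgn2 A' (X - A') * minor g A' A * minor g (X - A') C) else 0) = 0" by (simp add: m0)
      thus ?thesis using False by (simp add: sum.neutral)
    next
      case True
      have cXA: "card (X - A') = t" using True A' cX fX by (simp add: card_Diff_subset finite_subset)
      have "(\<Sum>C\<in>Pow B. if card C = t then sgn2 C (B - C) * minor g Y (B - C) *
        (sgn2 A' (X - A') * minor g A' A * minor g (X - A') C) else 0) =
        (\<Sum>C\<in>Pow B. sgn2 A' (X - A') * minor g A' A * (sgn2 C (B - C) * minor g (X - A') C * minor g Y (B - C)))"
      proof (intro sum.cong refl)
        fix C assume "C \<in> Pow B"
        hence fC: "finite C" using fB finite_subset by auto
        show "(if card C = t then sgn2 C (B - C) * minor g Y (B - C) *
          (sgn2 A' (X - A') * minor g A' A * minor g (X - A') C) else 0) =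
          sgn2 A' (X - A') * minor g A' A * (sgn2 C (B - C) * minor g (X - A') C * minor g Y (B - C))"
          using minor_card[OF fC, of "X - A'" g] cXA by (auto simp: ac_simps)
      qed
      also have "\<dots> = sgn2 A' (X - A') * minor g A' A *
          (\<Sum>C\<in>Pow B. sgn2 C (B - C) * minor g (X - A') C * minor g Y (B - C))"
        by (simp add: sum_distrib_left)
      also have "\<dots> = sgn2 A' (X - A') * minor g A' A *
          (if (X - A') \<inter> Y = {} then sgn2 (X - A') Y * minor g ((X - A') \<union> Y) B else 0)"
        using split_col'[OF fB _ fY, of "X - A'" g] fX by simp
      finally show ?thesis using True by simp
    qed
  qed
  also have "\<dots> = (\<Sum>A'\<in>{A'\<in>Pow X. card A' = a \<and> (X - A') \<inter> Y = {}}. minor g A' A * minor g (Y \<union> (X - A')) B * (sgn2 (X - A') Y * sgn2 A' (X - A')))"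
    unfolding sum.inter_filter[OF fPX] by (intro sum.cong refl) (auto simp: ac_simps Un_commute)
  finally show ?thesis .
qed

lemma delta_basis_equiv:
  fixes g :: "nat \<Rightarrow> nat \<Rightarrow> 'a::comm_ring_1"
  assumes A: "A \<in> idx n a" and B: "B \<in> idx n b" and X: "X \<in> idx n (a+t)" and Y: "Y \<in> idx n (b-t)"
    and t: "t \<le> b"
  shows "(\<Sum>P\<in>idx n (a+t) \<times> idx n (b-t). (minor g X (fst P) * minor g Y (snd P)) * delta_basis t A B P) =
    (\<Sum>P\<in>idx n a \<times> idx n b. (minor g (fst P) A * minor g (snd P) B) * delta_basis t (fst P) (snd P) (X,Y))"
  using delta_lhs[OF A B t, of "\<lambda>P. minor g X (fst P) * minor g Y (snd P)"]
    delta_rhs[OF X Y t, of "\<lambda>P. minor g (fst P) A * minor g (snd P) B"]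
    delta_mid[of A B X Y a t g] A B X Y idx_finite[OF A] idx_finite[OF B] idx_finite[OF X] idx_finite[OF Y]
  by (simp add: idx_mem)

lemma delta_alt: "delta n a b t f Q = (\<Sum>P\<in>idx n a \<times> idx n b. f P * delta_basis t (fst P) (snd P) Q)"
  by (simp add: delta_def case_prod_beta)

lemma theta_alt: "theta n a b t f Q = (\<Sum>P\<in>idx n (a+t) \<times> idx n (b-t). f P * theta_basis a (fst P) (snd P) Q)"
  by (simp add: theta_def case_prod_beta)

lemma rho_alt: "rho n a b g f Q = (if Q \<in> idx n a \<times> idx n b then
   (\<Sum>P\<in>idx n a \<times> idx n b. minor g (fst Q) (fst P) * minor g (snd Q) (snd P) * f P) else 0)"
  by (cases Q) (simp add: rho_def case_prod_beta)

lemma delta_equiv: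
  fixes g :: "nat \<Rightarrow> nat \<Rightarrow> 'a::comm_ring_1"
  assumes t: "t \<le> b"
  shows "rho n (a+t) (b-t) g (delta n a b t f) = delta n a b t (rho n a b g f)"
proof
  fix Q
  let ?I = "idx n a \<times> idx n b" and ?I' = "idx n (a+t) \<times> idx n (b-t)"
  show "rho n (a+t) (b-t) g (delta n a b t f) Q = delta n a b t (rho n a b g f) Q"
  proof (cases "Q \<in> ?I'")
    case True
    have "rho n (a+t) (b-t) g (delta n a b t f) Q =
        (\<Sum>P'\<in>?I'. \<Sum>P\<in>?I. (minor g (fst Q) (fst P') * minor g (snd Q) (snd P')) * (f P * delta_basis t (fst P) (snd P) P'))"
      using True by (simp add: rho_alt delta_alt sum_distrib_left)
    also have "\<dots> = (\<Sum>P\<in>?I. \<Sum>P'\<in>?I'. (minor g (fst Q) (fst P') * minor g (snd Q) (snd P')) * (f P * delta_basis t (fst P) (snd P) P'))"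
      by (rule sum.swap)
    also have "\<dots> = (\<Sum>P\<in>?I. f P * (\<Sum>P'\<in>?I'. (minor g (fst Q) (fst P') * minor g (snd Q) (snd P')) * delta_basis t (fst P) (snd P) P'))"
      by (simp add: sum_distrib_left ac_simps)
    also have "\<dots> = (\<Sum>P\<in>?I. f P * (\<Sum>P''\<in>?I. (minor g (fst P'') (fst P) * minor g (snd P'') (snd P)) * delta_basis t (fst P'') (snd P'') Q))"
    proof (intro sum.cong refl)
      fix P assume P: "P \<in> ?I"
      obtain X Y where Q: "Q = (X,Y)" by (cases Q)
      have "(\<Sum>P'\<in>?I'. (minor g (fst Q) (fst P') * minor g (snd Q) (snd P')) * delta_basis t (fst P) (snd P) P') =
         (\<Sum>P''\<in>?I. (minor g (fst P'') (fst P) * minor g (snd P'') (snd P)) * delta_basis t (fst P'') (snd P'') Q)"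
        using delta_basis_equiv[of "fst P" n a "snd P" b X t Y g] P True Q t by auto
      thus "f P * (\<Sum>P'\<in>?I'. (minor g (fst Q) (fst P') * minor g (snd Q) (snd P')) * delta_basis t (fst P) (snd P) P') =
         f P * (\<Sum>P''\<in>?I. (minor g (fst P'') (fst P) * minor g (snd P'') (snd P)) * delta_basis t (fst P'') (snd P'') Q)"
        by simp
    qed
    also have "\<dots> = (\<Sum>P\<in>?I. \<Sum>P''\<in>?I. minor g (fst P'') (fst P) * minor g (snd P'') (snd P) * f P * delta_basis t (fst P'') (snd P'') Q)"
      by (simp add: sum_distrib_left ac_simps)
    also have "\<dots> = (\<Sum>P''\<in>?I. \<Sum>P\<in>?I. minor g (fst P'') (fst P) * minor g (snd P'') (snd P) * f P * delta_basis t (fst P'') (snd P'') Q)"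
      by (rule sum.swap)
    also have "\<dots> = (\<Sum>P''\<in>?I. (\<Sum>P\<in>?I. minor g (fst P'') (fst P) * minor g (snd P'') (snd P) * f P) * delta_basis t (fst P'') (snd P'') Q)"
      by (simp add: sum_distrib_right)
    also have "\<dots> = delta n a b t (rho n a b g f) Q"
      by (simp add: delta_alt rho_alt)
    finally show ?thesis .
  next
    case False
    have "delta n a b t (rho n a b g f) Q = 0"
      unfolding delta_alt
    proof (rule sum.neutral, rule ballI)
      fix P assume P: "P \<in> ?I"
      have "delta_basis t (fst P) (snd P) Q = (0::'a)"
      proof (rule ccontr)
        assume nz: "delta_basis t (fst P) (snd P) Q \<noteq> (0::'a)"
        have "(fst Q, snd Q) \<in> ?I'"
          by (rule delta_basis_supp[of "fst P" n a "snd P" b t "fst Q" "snd Q"]) (use P t nz in auto)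
        thus False using False by simp
      qed
      thus "rho n a b g f P * delta_basis t (fst P) (snd P) Q = 0" by simp
    qed
    thus ?thesis using False by (simp add: rho_alt)
  qed
qed

lemma theta_lhs:
  fixes h :: "nat set \<times> nat set \<Rightarrow> 'a::comm_ring_1"
  assumes X: "X \<in> idx n (a+t)" and Y: "Y \<in> idx n (b-t)" and t: "t \<le> b"
  shows "(\<Sum>P\<in>idx n a \<times> idx n b. h P * theta_basis a X Y P) =
    (\<Sum>A\<in>{A\<in>Pow X. card A = a \<and> (X - A) \<inter> Y = {}}. h (A, (X - A) \<union> Y) * (sgn2 A (X - A) * sgn2 (X - A) Y))"
proof -
  let ?J = "{A\<in>Pow X. card A = a \<and> (X - A) \<inter> Y = {}}"
  let ?phi = "\<lambda>A. (A, (X - A) \<union> Y)"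
  have fX: "finite X" and fY: "finite Y" using X Y idx_finite by auto
  have sub: "?phi ` ?J \<subseteq> idx n a \<times> idx n b"
  proof
    fix P assume "P \<in> ?phi ` ?J"
    then obtain A where C: "A \<subseteq> X" "card A = a" "(X - A) \<inter> Y = {}" and P: "P = ?phi A" by auto
    have "card (X - A) = t" using C X fX by (simp add: card_Diff_subset finite_subset idx_mem)
    hence "card ((X - A) \<union> Y) = b" using C fX fY Y t by (simp add: card_Un_disjoint idx_mem)
    thus "P \<in> idx n a \<times> idx n b" using P C X Y by (auto simp: idx_mem)
  qed
  have "(\<Sum>P\<in>idx n a \<times> idx n b. h P * theta_basis a X Y P) = (\<Sum>P\<in>?phi ` ?J. h P * theta_basis a X Y P)"
  proof (rule sum.mono_neutral_right[OF _ sub])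
    show "finite (idx n a \<times> idx n b)" using finite_idx by simp
    show "\<forall>P\<in>idx n a \<times> idx n b - ?phi ` ?J. h P * theta_basis a X Y P = 0"
    proof
      fix P assume P: "P \<in> idx n a \<times> idx n b - ?phi ` ?J"
      obtain A B where AB: "P = (A,B)" by (cases P)
      show "h P * theta_basis a X Y P = 0"
      proof (rule ccontr)
        assume "h P * theta_basis a X Y P \<noteq> 0"
        hence "theta_basis a X Y (A,B) \<noteq> (0::'a)" using AB by auto
        hence c: "A \<subseteq> X" "card A = a" "(X - A) \<inter> Y = {}" "B = (X - A) \<union> Y"
          using theta_basis_closed[OF fX, of a Y A B, where 'a='a] by (auto split: if_splits)
        hence "P = ?phi A" "A \<in> ?J" using AB by auto
        thus False using P by auto
      qed
    qed
  qed
  also have "\<dots> = (\<Sum>A\<in>?J. h (?phi A) * theta_basis a X Y (?phi A))"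
    by (rule sum.reindex_cong[where l="?phi"]) (auto simp: inj_on_def)
  also have "\<dots> = (\<Sum>A\<in>?J. h (A, (X - A) \<union> Y) * (sgn2 A (X - A) * sgn2 (X - A) Y))"
  proof (rule sum.cong[OF refl])
    fix A assume "A \<in> ?J"
    hence "A \<subseteq> X" "card A = a" "(X - A) \<inter> Y = {}" by auto
    thus "h (?phi A) * theta_basis a X Y (?phi A) = h (A, (X - A) \<union> Y) * (sgn2 A (X - A) * sgn2 (X - A) Y)"
      using theta_basis_closed[OF fX, of a Y A "(X - A) \<union> Y", where 'a='a] by auto
  qed
  finally show ?thesis .
qed

lemma theta_rhs:
  fixes h :: "nat set \<times> nat set \<Rightarrow> 'a::comm_ring_1"
  assumes A': "A' \<in> idx n a" and B': "B' \<in> idx n b" and t: "t \<le> b"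
  shows "(\<Sum>P\<in>idx n (a+t) \<times> idx n (b-t). h P * theta_basis a (fst P) (snd P) (A',B')) =
    (\<Sum>C\<in>{C\<in>Pow B'. card C = t \<and> A' \<inter> C = {}}. h (A' \<union> C, B' - C) * (sgn2 A' C * sgn2 C (B' - C)))"
proof -
  let ?J = "{C\<in>Pow B'. card C = t \<and> A' \<inter> C = {}}"
  let ?phi = "\<lambda>C. (A' \<union> C, B' - C)"
  have fA: "finite A'" and fB: "finite B'" using A' B' idx_finite by auto
  have sub: "?phi ` ?J \<subseteq> idx n (a+t) \<times> idx n (b-t)"
  proof
    fix P assume "P \<in> ?phi ` ?J"
    then obtain C where C: "C \<subseteq> B'" "card C = t" "A' \<inter> C = {}" and P: "P = ?phi C" by auto
    have "card (A' \<union> C) = a + t" using C fA fB A' by (simp add: card_Un_disjoint idx_mem finite_subset)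
    moreover have "card (B' - C) = b - t" using C B' fB by (simp add: card_Diff_subset finite_subset idx_mem)
    ultimately show "P \<in> idx n (a+t) \<times> idx n (b-t)" using P C A' B' by (auto simp: idx_mem)
  qed
  have "(\<Sum>P\<in>idx n (a+t) \<times> idx n (b-t). h P * theta_basis a (fst P) (snd P) (A',B')) =
        (\<Sum>P\<in>?phi ` ?J. h P * theta_basis a (fst P) (snd P) (A',B'))"
  proof (rule sum.mono_neutral_right[OF _ sub])
    show "finite (idx n (a + t) \<times> idx n (b - t))" using finite_idx by simp
    show "\<forall>P\<in>idx n (a + t) \<times> idx n (b - t) - ?phi ` ?J. h P * theta_basis a (fst P) (snd P) (A',B') = 0"
    proof
      fix P assume P: "P \<in> idx n (a + t) \<times> idx n (b - t) - ?phi ` ?J"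
      obtain X Y where XY: "P = (X,Y)" by (cases P)
      have fX: "finite X" using P XY idx_finite by auto
      have cX: "card X = a + t" using P XY by (auto simp: idx_mem)
      show "h P * theta_basis a (fst P) (snd P) (A',B') = 0"
      proof (rule ccontr)
        assume "h P * theta_basis a (fst P) (snd P) (A',B') \<noteq> 0"
        hence "theta_basis a X Y (A',B') \<noteq> (0::'a)" using XY by auto
        hence c: "A' \<subseteq> X" "card A' = a" "(X - A') \<inter> Y = {}" "B' = (X - A') \<union> Y"
          using theta_basis_closed[OF fX, of a Y A' B', where 'a='a] by (auto split: if_splits)
        have "card (X - A') = t" using c cX fX by (simp add: card_Diff_subset finite_subset)
        hence "P = ?phi (X - A')" "X - A' \<in> ?J" using XY c by auto
        thus False using P by blast
      qed
    qed
  qed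
  also have "\<dots> = (\<Sum>C\<in>?J. h (?phi C) * theta_basis a (A' \<union> C) (B' - C) (A',B'))"
    by (rule sum.reindex_cong[where l="?phi"]) (auto simp: inj_on_def double_diff)
  also have "\<dots> = (\<Sum>C\<in>?J. h (A' \<union> C, B' - C) * (sgn2 A' C * sgn2 C (B' - C)))"
  proof (rule sum.cong[OF refl])
    fix C assume "C \<in> ?J"
    hence c: "C \<subseteq> B'" "card C = t" "A' \<inter> C = {}" by auto
    have e: "A' \<union> C - A' = C" "B' = C \<union> (B' - C)" using c by auto
    have fAC: "finite (A' \<union> C)" using fA fB c finite_subset by auto
    show "h (?phi C) * theta_basis a (A' \<union> C) (B' - C) (A',B') = h (A' \<union> C, B' - C) * (sgn2 A' C * sgn2 C (B' - C))"
      using theta_basis_closed[OF fAC, of a "B' - C" A' B', where 'a='a] e A' by (auto simp: idx_mem)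
  qed
  finally show ?thesis .
qed

lemma theta_mid:
  fixes g :: "nat \<Rightarrow> nat \<Rightarrow> 'a::comm_ring_1"
  assumes fA: "finite A'" and fB: "finite B'" and fX: "finite X" and fY: "finite Y"
    and cA: "card A' = a" and cX: "card X = a + t"
  shows "(\<Sum>A\<in>{A\<in>Pow X. card A = a \<and> (X - A) \<inter> Y = {}}. minor g A' A * minor g B' ((X - A) \<union> Y) * (sgn2 A (X - A) * sgn2 (X - A) Y)) =
    (\<Sum>C\<in>{C\<in>Pow B'. card C = t \<and> A' \<inter> C = {}}. minor g (A' \<union> C) X * minor g (B' - C) Y * (sgn2 A' C * sgn2 C (B' - C)))"
proof -
  have fPB: "finite (Pow B')" and fPX: "finite (Pow X)" using fB fX by auto
  have "(\<Sum>A\<in>{A\<in>Pow X. card A = a \<and> (X - A) \<inter> Y = {}}. minor g A' A * minor g B' ((X - A) \<union> Y) * (sgn2 A (X - A) * sgn2 (X - A) Y)) =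
     (\<Sum>A\<in>Pow X. if card A = a then sgn2 A (X - A) * minor g A' A *
        (if (X - A) \<inter> Y = {} then sgn2 (X - A) Y * minor g B' ((X - A) \<union> Y) else 0) else 0)"
    unfolding sum.inter_filter[OF fPX] by (intro sum.cong refl) (auto simp: ac_simps)
  also have "\<dots> = (\<Sum>A\<in>Pow X. if card A = a then sgn2 A (X - A) * minor g A' A *
        (\<Sum>C\<in>Pow B'. sgn2 C (B' - C) * minor g C (X - A) * minor g (B' - C) Y) else 0)"
  proof (intro sum.cong refl)
    fix A assume "A \<in> Pow X"
    hence "finite (X - A)" using fX by auto
    thus "(if card A = a then sgn2 A (X - A) * minor g A' A *
        (if (X - A) \<inter> Y = {} then sgn2 (X - A) Y * minor g B' ((X - A) \<union> Y) else 0) else 0) =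
       (if card A = a then sgn2 A (X - A) * minor g A' A *
        (\<Sum>C\<in>Pow B'. sgn2 C (B' - C) * minor g C (X - A) * minor g (B' - C) Y) else 0)"
      using split_row[OF fB _ fY, of "X - A" g] by simp
  qed
  also have "\<dots> = (\<Sum>A\<in>Pow X. \<Sum>C\<in>Pow B'. if card A = a then sgn2 A (X - A) * minor g A' A *
        (sgn2 C (B' - C) * minor g C (X - A) * minor g (B' - C) Y) else 0)"
    by (intro sum.cong refl) (auto simp: sum_distrib_left)
  also have "\<dots> = (\<Sum>C\<in>Pow B'. \<Sum>A\<in>Pow X. if card A = a then sgn2 A (X - A) * minor g A' A *
        (sgn2 C (B' - C) * minor g C (X - A) * minor g (B' - C) Y) else 0)"
    by (rule sum.swap)
  also have "\<dots> = (\<Sum>C\<in>Pow B'. if card C = t then sgn2 C (B' - C) * minor g (B' - C) Y *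
        (if A' \<inter> C = {} then sgn2 A' C * minor g (A' \<union> C) X else 0) else 0)"
  proof (rule sum.cong[OF refl])
    fix C assume C: "C \<in> Pow B'"
    have fC: "finite C" using C fB finite_subset by auto
    show "(\<Sum>A\<in>Pow X. if card A = a then sgn2 A (X - A) * minor g A' A *
        (sgn2 C (B' - C) * minor g C (X - A) * minor g (B' - C) Y) else 0) =
      (if card C = t then sgn2 C (B' - C) * minor g (B' - C) Y *
        (if A' \<inter> C = {} then sgn2 A' C * minor g (A' \<union> C) X else 0) else 0)"
    proof (cases "card C = t")
      case False
      have "\<forall>A\<in>Pow X. (if card A = a then sgn2 A (X - A) * minor g A' A *
        (sgn2 C (B' - C) * minor g C (X - A) * minor g (B' - C) Y) else 0) = 0"
      proof
        fix A assume A: "A \<in> Pow X"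
        show "(if card A = a then sgn2 A (X - A) * minor g A' A *
          (sgn2 C (B' - C) * minor g C (X - A) * minor g (B' - C) Y) else 0) = 0"
        proof (cases "card A = a")
          case True
          hence "card (X - A) = t" using A cX fX by (simp add: card_Diff_subset finite_subset)
          hence "minor g C (X - A) = 0" using minor_card[of "X - A" C g] fX False by simp
          thus ?thesis by simp
        qed simp
      qed
      thus ?thesis using False by (simp add: sum.neutral)
    next
      case True
      have "(\<Sum>A\<in>Pow X. if card A = a then sgn2 A (X - A) * minor g A' A *
        (sgn2 C (B' - C) * minor g C (X - A) * minor g (B' - C) Y) else 0) =
        (\<Sum>A\<in>Pow X. sgn2 C (B' - C) * minor g (B' - C) Y * (sgn2 A (X - A) * minor g A' A * minor g C (X - A)))"
      proof (intro sum.cong refl)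
        fix A assume "A \<in> Pow X"
        hence fA0: "finite A" using fX finite_subset by auto
        show "(if card A = a then sgn2 A (X - A) * minor g A' A *
          (sgn2 C (B' - C) * minor g C (X - A) * minor g (B' - C) Y) else 0) =
          sgn2 C (B' - C) * minor g (B' - C) Y * (sgn2 A (X - A) * minor g A' A * minor g C (X - A))"
          using minor_card[OF fA0, of A' g] cA by (auto simp: ac_simps)
      qed
      also have "\<dots> = sgn2 C (B' - C) * minor g (B' - C) Y *
          (\<Sum>A\<in>Pow X. sgn2 A (X - A) * minor g A' A * minor g C (X - A))"
        by (simp add: sum_distrib_left)
      also have "\<dots> = sgn2 C (B' - C) * minor g (B' - C) Y *
          (if A' \<inter> C = {} then sgn2 A' C * minor g (A' \<union> C) X else 0)"
        using split_col'[OF fX fA fC, of g] by simp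
      finally show ?thesis using True by simp
    qed
  qed
  also have "\<dots> = (\<Sum>C\<in>{C\<in>Pow B'. card C = t \<and> A' \<inter> C = {}}. minor g (A' \<union> C) X * minor g (B' - C) Y * (sgn2 A' C * sgn2 C (B' - C)))"
    unfolding sum.inter_filter[OF fPB] by (intro sum.cong refl) (auto simp: ac_simps)
  finally show ?thesis .
qed

lemma theta_basis_equiv:
  fixes g :: "nat \<Rightarrow> nat \<Rightarrow> 'a::comm_ring_1"
  assumes A': "A' \<in> idx n a" and B': "B' \<in> idx n b" and X: "X \<in> idx n (a+t)" and Y: "Y \<in> idx n (b-t)"
    and t: "t \<le> b"
  shows "(\<Sum>P\<in>idx n a \<times> idx n b. (minor g A' (fst P) * minor g B' (snd P)) * theta_basis a X Y P) =
    (\<Sum>P\<in>idx n (a+t) \<times> idx n (b-t). (minor g (fst P) X * minor g (snd P) Y) * theta_basis a (fst P) (snd P) (A',B'))"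
  using theta_lhs[OF X Y t, of "\<lambda>P. minor g A' (fst P) * minor g B' (snd P)"]
    theta_rhs[OF A' B' t, of "\<lambda>P. minor g (fst P) X * minor g (snd P) Y"]
    theta_mid[of A' B' X Y a t g] idx_finite[OF A'] idx_finite[OF B'] idx_finite[OF X] idx_finite[OF Y] A' X
  by (simp add: idx_mem)

lemma theta_equiv:
  fixes g :: "nat \<Rightarrow> nat \<Rightarrow> 'a::comm_ring_1"
  assumes t: "t \<le> b"
  shows "rho n a b g (theta n a b t f) = theta n a b t (rho n (a+t) (b-t) g f)"
proof
  fix Q
  let ?I = "idx n a \<times> idx n b" and ?I' = "idx n (a+t) \<times> idx n (b-t)"
  show "rho n a b g (theta n a b t f) Q = theta n a b t (rho n (a+t) (b-t) g f) Q"
  proof (cases "Q \<in> ?I")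
    case True
    have "rho n a b g (theta n a b t f) Q =
        (\<Sum>P\<in>?I. \<Sum>P0\<in>?I'. (minor g (fst Q) (fst P) * minor g (snd Q) (snd P)) * (f P0 * theta_basis a (fst P0) (snd P0) P))"
      using True by (simp add: rho_alt theta_alt sum_distrib_left)
    also have "\<dots> = (\<Sum>P0\<in>?I'. \<Sum>P\<in>?I. (minor g (fst Q) (fst P) * minor g (snd Q) (snd P)) * (f P0 * theta_basis a (fst P0) (snd P0) P))"
      by (rule sum.swap)
    also have "\<dots> = (\<Sum>P0\<in>?I'. f P0 * (\<Sum>P\<in>?I. (minor g (fst Q) (fst P) * minor g (snd Q) (snd P)) * theta_basis a (fst P0) (snd P0) P))"
      by (simp add: sum_distrib_left ac_simps)
    also have "\<dots> = (\<Sum>P0\<in>?I'. f P0 * (\<Sum>P'\<in>?I'. (minor g (fst P') (fst P0) * minor g (snd P') (snd P0)) * theta_basis a (fst P') (snd P') Q))"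
    proof (intro sum.cong refl)
      fix P0 assume P0: "P0 \<in> ?I'"
      obtain A' B' where Q: "Q = (A',B')" by (cases Q)
      have "(\<Sum>P\<in>?I. (minor g (fst Q) (fst P) * minor g (snd Q) (snd P)) * theta_basis a (fst P0) (snd P0) P) =
         (\<Sum>P'\<in>?I'. (minor g (fst P') (fst P0) * minor g (snd P') (snd P0)) * theta_basis a (fst P') (snd P') Q)"
        using theta_basis_equiv[of A' n a B' b "fst P0" t "snd P0" g] P0 True Q t by auto
      thus "f P0 * (\<Sum>P\<in>?I. (minor g (fst Q) (fst P) * minor g (snd Q) (snd P)) * theta_basis a (fst P0) (snd P0) P) =
         f P0 * (\<Sum>P'\<in>?I'. (minor g (fst P') (fst P0) * minor g (snd P') (snd P0)) * theta_basis a (fst P') (snd P') Q)"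
        by simp
    qed
    also have "\<dots> = (\<Sum>P0\<in>?I'. \<Sum>P'\<in>?I'. minor g (fst P') (fst P0) * minor g (snd P') (snd P0) * f P0 * theta_basis a (fst P') (snd P') Q)"
      by (simp add: sum_distrib_left ac_simps)
    also have "\<dots> = (\<Sum>P'\<in>?I'. \<Sum>P0\<in>?I'. minor g (fst P') (fst P0) * minor g (snd P') (snd P0) * f P0 * theta_basis a (fst P') (snd P') Q)"
      by (rule sum.swap)
    also have "\<dots> = (\<Sum>P'\<in>?I'. (\<Sum>P0\<in>?I'. minor g (fst P') (fst P0) * minor g (snd P') (snd P0) * f P0) * theta_basis a (fst P') (snd P') Q)"
      by (simp add: sum_distrib_right)
    also have "\<dots> = theta n a b t (rho n (a+t) (b-t) g f) Q"
      by (simp add: theta_alt rho_alt)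
    finally show ?thesis .
  next
    case False
    have "theta n a b t (rho n (a+t) (b-t) g f) Q = 0"
      unfolding theta_alt
    proof (rule sum.neutral, rule ballI)
      fix P assume P: "P \<in> ?I'"
      have "theta_basis a (fst P) (snd P) Q = (0::'a)"
      proof (rule ccontr)
        assume nz: "theta_basis a (fst P) (snd P) Q \<noteq> (0::'a)"
        have "(fst Q, snd Q) \<in> ?I"
          by (rule theta_basis_supp[of "fst P" n a t "snd P" b "fst Q" "snd Q"]) (use P t nz in auto)
        thus False using False by simp
      qed
      thus "rho n (a+t) (b-t) g f P * theta_basis a (fst P) (snd P) Q = 0" by simp
    qed
    thus ?thesis using False by (simp add: rho_alt)
  qed
qed

lemma Phi_equiv:
  fixes g :: "nat \<Rightarrow> nat \<Rightarrow> 'a::comm_ring_1"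
  assumes t: "t \<le> b"
  shows "rho n a b g (Phi n a b t f) = Phi n a b t (rho n a b g f)"
  unfolding Phi_def using theta_equiv[OF t] delta_equiv[OF t] by metis

lemma W_mem: "f \<in> W n a b \<longleftrightarrow> (\<forall>P. P \<notin> idx n a \<times> idx n b \<longrightarrow> f P = 0)"
  by (simp add: W_def)

lemma theta_add: "theta n a b t (\<lambda>x. f x + h x) = (\<lambda>Q. theta n a b t f Q + theta n a b t h Q)"
  by (rule ext) (simp add: theta_alt distrib_right sum.distrib)

lemma theta_smult: "theta n a b t (\<lambda>x. c * f x) = (\<lambda>Q. c * theta n a b t f Q)"
  by (rule ext) (simp add: theta_alt sum_distrib_left mult.assoc)

lemma delta_add: "delta n a b t (\<lambda>x. f x + h x) = (\<lambda>Q. delta n a b t f Q + delta n a b t h Q)"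
  by (rule ext) (simp add: delta_alt distrib_right sum.distrib)

lemma delta_smult: "delta n a b t (\<lambda>x. c * f x) = (\<lambda>Q. c * delta n a b t f Q)"
  by (rule ext) (simp add: delta_alt sum_distrib_left mult.assoc)

lemma Phi_add: "Phi n a b t (\<lambda>x. f x + h x) = (\<lambda>Q. Phi n a b t f Q + Phi n a b t h Q)"
  unfolding Phi_def delta_add theta_add ..

lemma Phi_smult: "Phi n a b t (\<lambda>x. c * f x) = (\<lambda>Q. c * Phi n a b t f Q)"
  unfolding Phi_def delta_smult theta_smult ..

lemma Phi_W:
  assumes t: "t \<le> b"
  shows "Phi n a b t f \<in> W n a b"
  unfolding W_mem
proof (intro allI impI)
  fix Q assume Q: "Q \<notin> idx n a \<times> idx n b"
  show "Phi n a b t f Q = (0::'a::comm_ring_1)"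
    unfolding Phi_def theta_alt
  proof (rule sum.neutral, rule ballI)
    fix P assume P: "P \<in> idx n (a+t) \<times> idx n (b-t)"
    have "theta_basis a (fst P) (snd P) Q = (0::'a)"
    proof (rule ccontr)
      assume nz: "theta_basis a (fst P) (snd P) Q \<noteq> (0::'a)"
      have "(fst Q, snd Q) \<in> idx n a \<times> idx n b"
        by (rule theta_basis_supp[of "fst P" n a t "snd P" b "fst Q" "snd Q"]) (use P t nz in auto)
      thus False using Q by simp
    qed
    thus "delta n a b t f P * theta_basis a (fst P) (snd P) Q = 0" by simp
  qed
qed

lemma Phi_HomG:
  assumes t: "t \<le> b"
  shows "(Phi n a b t :: ('a::comm_ring_1) tensor \<Rightarrow> 'a tensor) \<in> HomG n a b"
  unfolding HomG_def using Phi_W[OF t] Phi_add Phi_smult Phi_equiv[OF t, symmetric] by auto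

lemma sum_single:
  assumes "finite A" "x \<in> A" "\<And>y. y \<in> A \<Longrightarrow> y \<noteq> x \<Longrightarrow> f y = 0"
  shows "sum f A = f x"
proof -
  have "sum f A = f x + sum f (A - {x})" using assms(1,2) by (rule sum.remove)
  also have "sum f (A - {x}) = 0" using assms(3) by (intro sum.neutral) auto
  finally show ?thesis by simp
qed

lemma minor_monomial:
  fixes g :: "nat \<Rightarrow> nat \<Rightarrow> 'a::comm_ring_1"
  assumes fS': "finite S'" and inj: "inj_on \<pi> S'"
    and g: "\<And>i j. j \<in> S' \<Longrightarrow> g i j = (if i = \<pi> j then l j else 0)"
  shows "minor g S S' = (if S = \<pi> ` S' then (-1)^ninv \<pi> S' * (\<Prod>j\<in>S'. l j) else 0)"
proof -
  let ?p0 = "\<lambda>x. if x \<in> S' then \<pi> x else x"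
  have tm0: "tm g p S' = 0" if p: "p \<in> Bij S' S" "p \<noteq> ?p0" for p
  proof -
    obtain j where j: "j \<in> S'" "p j \<noteq> \<pi> j"
      using p by (auto simp: Bij_def fun_eq_iff split: if_splits)
    hence "g (p j) j = 0" using g by simp
    hence "(\<Prod>j\<in>S'. g (p j) j) = 0" using j fS' by (intro prod_zero) auto
    thus ?thesis by (simp add: tm_def)
  qed
  show ?thesis
  proof (cases "S = \<pi> ` S'")
    case True
    have bb: "bij_betw ?p0 S' S"
      unfolding True by (rule bij_betw_cong[THEN iffD1, of _ \<pi>]) (use inj in \<open>auto simp: bij_betw_def\<close>)
    have p0: "?p0 \<in> Bij S' S" unfolding Bij_def using bb by auto
    have fin: "finite (Bij S' S)" using finite_Bij fS' True by auto
    have "minor g S S' = tm g ?p0 S'"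
      unfolding minor_alt by (rule sum_single[OF fin p0]) (use tm0 in auto)
    also have "\<dots> = (-1)^ninv \<pi> S' * (\<Prod>j\<in>S'. l j)"
      unfolding tm_def using ninv_cong[of S' ?p0 \<pi>] g by simp
    finally show ?thesis using True by simp
  next
    case False
    have "\<forall>p\<in>Bij S' S. tm g p S' = 0"
    proof
      fix p assume p: "p \<in> Bij S' S"
      have "p \<noteq> ?p0"
      proof
        assume "p = ?p0"
        hence "p ` S' = \<pi> ` S'" by auto
        moreover have "p ` S' = S" using p by (auto simp: Bij_def bij_betw_def)
        ultimately show False using False by simp
      qed
      thus "tm g p S' = 0" using tm0 p by simp
    qed
    thus ?thesis using False by (simp add: minor_alt)
  qed
qed

lemma ninv_id: "ninv (\<lambda>x. x) S = 0"
proof -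
  have e: "{(i, j). i \<in> S \<and> j \<in> S \<and> i < j \<and> j < i} = {}" by auto
  show ?thesis unfolding ninv_def by (subst e) simp
qed

definition dmat :: "nat \<Rightarrow> nat \<Rightarrow> nat \<Rightarrow> 'a::field" where
  "dmat j = (\<lambda>i k. if i = k then (if k = j then 2 else 1) else 0)"

definition pmat :: "(nat \<Rightarrow> nat) \<Rightarrow> nat \<Rightarrow> nat \<Rightarrow> 'a::comm_ring_1" where
  "pmat \<pi> = (\<lambda>i k. if i = \<pi> k then 1 else 0)"

definition tmat :: "nat \<Rightarrow> nat \<Rightarrow> nat \<Rightarrow> nat \<Rightarrow> 'a::comm_ring_1" where
  "tmat i0 j0 = (\<lambda>i k. (if i = k then 1 else 0) + (if i = i0 \<and> k = j0 then 1 else 0))"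

lemma minor_dmat:
  assumes "finite S'"
  shows "minor (dmat j :: nat \<Rightarrow> nat \<Rightarrow> 'a::field) S S' = (if S = S' then (if j \<in> S' then 2 else 1) else 0)"
proof -
  have "minor (dmat j :: nat \<Rightarrow> nat \<Rightarrow> 'a) S S' =
    (if S = (\<lambda>x. x) ` S' then (-1)^ninv (\<lambda>x. x) S' * (\<Prod>k\<in>S'. if k = j then 2 else 1) else 0)"
    by (rule minor_monomial[OF assms]) (auto simp: dmat_def)
  thus ?thesis using assms by (simp add: ninv_id prod.delta)
qed

lemma minor_pmat:
  assumes "finite S'" "inj_on \<pi> S'"
  shows "minor (pmat \<pi> :: nat \<Rightarrow> nat \<Rightarrow> 'a::comm_ring_1) S S' = (if S = \<pi> ` S' then (-1)^ninv \<pi> S' else 0)"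
proof -
  have "minor (pmat \<pi> :: nat \<Rightarrow> nat \<Rightarrow> 'a) S S' =
    (if S = \<pi> ` S' then (-1)^ninv \<pi> S' * (\<Prod>k\<in>S'. 1) else 0)"
    by (rule minor_monomial[OF assms]) (auto simp: pmat_def)
  thus ?thesis by simp
qed

lemma minor_tmat_out:
  assumes "finite S'" "j0 \<notin> S'"
  shows "minor (tmat i0 j0 :: nat \<Rightarrow> nat \<Rightarrow> 'a::comm_ring_1) S S' = (if S = S' then 1 else 0)"
proof -
  have "minor (tmat i0 j0 :: nat \<Rightarrow> nat \<Rightarrow> 'a) S S' =
    (if S = (\<lambda>x. x) ` S' then (-1)^ninv (\<lambda>x. x) S' * (\<Prod>k\<in>S'. 1) else 0)"
    by (rule minor_monomial[OF assms(1)]) (use assms(2) in \<open>auto simp: tmat_def\<close>)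
  thus ?thesis by (simp add: ninv_id)
qed

lemma minor_tmat_in:
  assumes fT: "finite T" and j0: "j0 \<in> T" and i0: "i0 \<notin> T"
  shows "minor (tmat i0 j0 :: nat \<Rightarrow> nat \<Rightarrow> 'a::comm_ring_1) S T =
    (if S = T then 1 else 0) + (if S = insert i0 (T - {j0}) then (-1)^ninv (\<lambda>x. if x = j0 then i0 else x) T else 0)"
proof -
  let ?g = "tmat i0 j0 :: nat \<Rightarrow> nat \<Rightarrow> 'a"
  let ?p1 = "\<lambda>x. if x = j0 then i0 else x"
  let ?id = "\<lambda>x::nat. x"
  have ij: "i0 \<noteq> j0" using j0 i0 by auto
  have fB: "finite (Bij T S)"
  proof (cases "finite S")
    case True thus ?thesis using finite_Bij[OF fT] by blast
  next
    case False
    have "Bij T S = {}"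
    proof (rule ccontr)
      assume "Bij T S \<noteq> {}"
      then obtain p where "bij_betw p T S" by (auto simp: Bij_def)
      hence "S = p ` T" by (simp add: bij_betw_def)
      thus False using False fT by simp
    qed
    thus ?thesis by simp
  qed
  have z: "tm ?g p T = 0" if p: "p \<in> Bij T S" "p \<noteq> ?id" "p \<noteq> ?p1" for p
  proof -
    have "\<exists>j\<in>T. ?g (p j) j = 0"
    proof (rule ccontr)
      assume "\<not> (\<exists>j\<in>T. ?g (p j) j = 0)"
      hence nz: "\<And>j. j \<in> T \<Longrightarrow> ?g (p j) j \<noteq> 0" by blast
      have pj: "\<And>j. j \<in> T \<Longrightarrow> p j = j \<or> (p j = i0 \<and> j = j0)"
        using nz by (fastforce simp: tmat_def split: if_splits)
      have out: "\<And>x. x \<notin> T \<Longrightarrow> p x = x" using p by (auto simp: Bij_def)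
      show False
      proof (cases "p j0 = j0")
        case True
        have "p = ?id"
        proof
          fix x show "p x = x"
          proof (cases "x \<in> T")
            case xT: True
            show ?thesis
            proof (cases "x = j0")
              case True thus ?thesis using \<open>p j0 = j0\<close> by simp
            next
              case False thus ?thesis using pj[OF xT] by auto
            qed
          qed (rule out)
        qed
        thus False using p by simp
      next
        case False
        hence "p j0 = i0" using pj j0 by auto
        have "p = ?p1"
        proof
          fix x show "p x = ?p1 x"
          proof (cases "x \<in> T")
            case xT: True
            show ?thesis
            proof (cases "x = j0")
              case True thus ?thesis using \<open>p j0 = i0\<close> by simp
            next
              case False thus ?thesis using pj[OF xT] by auto
            qed
          next
            case False thus ?thesis using out[OF False] j0 by auto
          qed
        qed
        thus False using p by simp
      qed
    qed
    hence "(\<Prod>j\<in>T. ?g (p j) j) = 0" using fT by (intro prod_zero) auto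
    thus ?thesis by (simp add: tm_def)
  qed
  have ne: "?id \<noteq> ?p1" using ij by (auto simp: fun_eq_iff)
  have "minor ?g S T = (\<Sum>p\<in>Bij T S \<inter> {?id, ?p1}. tm ?g p T)"
    unfolding minor_alt by (rule sum.mono_neutral_right[OF fB]) (use z in auto)
  also have "\<dots> = (if ?id \<in> Bij T S then tm ?g ?id T else 0) + (if ?p1 \<in> Bij T S then tm ?g ?p1 T else 0)"
    using ne by (cases "?id \<in> Bij T S"; cases "?p1 \<in> Bij T S") (auto simp: Int_insert_right)
  also have "(?id \<in> Bij T S) = (S = T)"
    by (auto simp: Bij_def bij_betw_def)
  also have "(?p1 \<in> Bij T S) = (S = insert i0 (T - {j0}))"
  proof -
    have "inj_on ?p1 T" using i0 by (auto simp: inj_on_def)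
    moreover have "?p1 ` T = insert i0 (T - {j0})" using j0 by auto
    ultimately show ?thesis using i0 by (auto simp: Bij_def bij_betw_def)
  qed
  also have "tm ?g ?id T = 1"
  proof -
    have "(\<Prod>j\<in>T. ?g j j) = 1" using ij by (intro prod.neutral) (auto simp: tmat_def)
    thus ?thesis by (simp add: tm_def ninv_id)
  qed
  also have "tm ?g ?p1 T = (-1)^ninv ?p1 T"
  proof -
    have "(\<Prod>j\<in>T. ?g (?p1 j) j) = 1" using ij i0 j0 by (intro prod.neutral) (auto simp: tmat_def)
    thus ?thesis by (simp add: tm_def)
  qed
  finally show ?thesis .
qed

lemma sum_diag:
  fixes d e :: "nat \<Rightarrow> 'a::comm_ring_1"
  assumes "i < n"
  shows "(\<Sum>k<n. (if i = k then d k else 0) * (if k = j then e k else 0)) = (if i = j then d i * e i else 0)"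
proof -
  have "(\<Sum>k<n. (if i = k then d k else 0) * (if k = j then e k else 0)) =
        (\<Sum>k<n. if k = i then (if i = j then d i * e i else 0) else 0)"
    by (intro sum.cong refl) auto
  also have "\<dots> = (if i = j then d i * e i else 0)" using assms by (simp add: sum.delta)
  finally show ?thesis .
qed

lemma dmat_GL: "(dmat j :: nat \<Rightarrow> nat \<Rightarrow> 'a::field_char_0) \<in> GL n"
proof -
  let ?h = "\<lambda>i k. if i = k then (if k = j then 1/2 else 1) else (0::'a)"
  have "\<forall>i<n. \<forall>j'<n. (\<Sum>k<n. dmat j i k * ?h k j') = (if i = j' then 1 else 0) \<and>
      (\<Sum>k<n. ?h i k * dmat j k j') = (if i = j' then 1 else 0)"
  proof (intro allI impI conjI)
    fix i j' assume i: "i < n" and "j' < n"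
    let ?d = "\<lambda>k. if k = j then 2 else (1::'a)" and ?e = "\<lambda>k. if k = j then 1/2 else (1::'a)"
    have "(\<Sum>k<n. dmat j i k * ?h k j') = (\<Sum>k<n. (if i = k then ?d k else 0) * (if k = j' then ?e k else 0))"
      by (intro sum.cong refl) (simp add: dmat_def)
    also have "\<dots> = (if i = j' then ?d i * ?e i else 0)" by (rule sum_diag[OF i])
    also have "\<dots> = (if i = j' then 1 else 0)" by simp
    finally show "(\<Sum>k<n. dmat j i k * ?h k j') = (if i = j' then 1 else 0)" .
    have "(\<Sum>k<n. ?h i k * dmat j k j') = (\<Sum>k<n. (if i = k then ?e k else 0) * (if k = j' then ?d k else 0))"
      by (intro sum.cong refl) (simp add: dmat_def)
    also have "\<dots> = (if i = j' then ?e i * ?d i else 0)" by (rule sum_diag[OF i])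
    also have "\<dots> = (if i = j' then 1 else 0)" by simp
    finally show "(\<Sum>k<n. ?h i k * dmat j k j') = (if i = j' then 1 else 0)" .
  qed
  thus ?thesis unfolding GL_def mem_Collect_eq by (rule exI[of _ ?h])
qed

lemma pmat_GL:
  assumes bij: "bij_betw \<pi> {..<n} {..<n}"
  shows "(pmat \<pi> :: nat \<Rightarrow> nat \<Rightarrow> 'a::comm_ring_1) \<in> GL n"
proof -
  let ?h = "\<lambda>i k. if k = \<pi> i then 1 else (0::'a)"
  let ?\<sigma> = "the_inv_into {..<n} \<pi>"
  have inj: "inj_on \<pi> {..<n}" and im: "\<pi> ` {..<n} = {..<n}" using bij by (auto simp: bij_betw_def)
  have "\<forall>i<n. \<forall>j<n. (\<Sum>k<n. pmat \<pi> i k * ?h k j) = (if i = j then 1 else 0) \<and>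
      (\<Sum>k<n. ?h i k * pmat \<pi> k j) = (if i = j then 1 else 0)"
  proof (intro allI impI conjI)
    fix i j assume i: "i < n" and j: "j < n"
    have si1: "?\<sigma> i \<in> {..<n}" by (rule the_inv_into_into[OF inj]) (use i im in auto)
    have si2: "\<pi> (?\<sigma> i) = i" by (rule f_the_inv_into_f[OF inj]) (use i im in auto)
    have eq: "\<And>k. k < n \<Longrightarrow> (i = \<pi> k) = (k = ?\<sigma> i)"
    proof
      fix k assume k: "k < n" "i = \<pi> k"
      thus "k = ?\<sigma> i" using the_inv_into_f_f[OF inj, of k] by simp
    next
      fix k assume "k = ?\<sigma> i" thus "i = \<pi> k" using si2 by simp
    qed
    have seq: "(\<Sum>k<n. pmat \<pi> i k * ?h k j) = (\<Sum>k<n. if k = ?\<sigma> i then (if i = j then 1 else 0) else (0::'a))"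
    proof (intro sum.cong refl)
      fix k assume "k \<in> {..<n}"
      hence "(i = \<pi> k) = (k = ?\<sigma> i)" using eq by simp
      thus "pmat \<pi> i k * ?h k j = (if k = ?\<sigma> i then (if i = j then 1 else 0) else (0::'a))"
        unfolding pmat_def by auto
    qed
    have si: "?\<sigma> i < n" using si1 by simp
    show "(\<Sum>k<n. pmat \<pi> i k * ?h k j) = (if i = j then 1 else 0)" unfolding seq using si by (simp add: sum.delta)
    have pi: "\<pi> i < n" using i im by auto
    have "(\<Sum>k<n. ?h i k * pmat \<pi> k j) = (\<Sum>k<n. if k = \<pi> i then (if i = j then 1 else 0) else (0::'a))"
    proof (intro sum.cong refl)
      fix k assume "k \<in> {..<n}"
      have "(\<pi> i = \<pi> j) = (i = j)" using inj i j by (auto simp: inj_on_def)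
      thus "?h i k * pmat \<pi> k j = (if k = \<pi> i then (if i = j then 1 else 0) else (0::'a))"
        unfolding pmat_def by auto
    qed
    thus "(\<Sum>k<n. ?h i k * pmat \<pi> k j) = (if i = j then 1 else 0)" using pi by (simp add: sum.delta)
  qed
  thus ?thesis unfolding GL_def mem_Collect_eq by (rule exI[of _ ?h])
qed

lemma tmat_GL:
  assumes ij: "i0 \<noteq> j0"
  shows "(tmat i0 j0 :: nat \<Rightarrow> nat \<Rightarrow> 'a::comm_ring_1) \<in> GL n"
proof -
  let ?h = "\<lambda>i k. (if i = k then 1 else 0) - (if i = i0 \<and> k = j0 then 1 else (0::'a))"
  have "\<forall>i<n. \<forall>j<n. (\<Sum>k<n. tmat i0 j0 i k * ?h k j) = (if i = j then 1 else 0) \<and>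
      (\<Sum>k<n. ?h i k * tmat i0 j0 k j) = (if i = j then 1 else 0)"
  proof (intro allI impI conjI)
    fix i j assume i: "i < n" and j: "j < n"
    have "(\<Sum>k<n. tmat i0 j0 i k * ?h k j) = (\<Sum>k<n. (if k = i then (if i = j then 1 else 0) - (if i = i0 \<and> j = j0 then 1 else 0) else 0)
         + (if k = j then (if i = i0 \<and> j0 = j then 1 else 0) else (0::'a)))"
      using ij by (intro sum.cong refl) (auto simp: tmat_def)
    also have "\<dots> = (if i = j then 1 else 0)" using i j by (simp add: sum.distrib sum.delta)
    finally show "(\<Sum>k<n. tmat i0 j0 i k * ?h k j) = (if i = j then 1 else 0)" .
    have "(\<Sum>k<n. ?h i k * tmat i0 j0 k j) = (\<Sum>k<n. (if k = i then (if i = j then 1 else 0) + (if i = i0 \<and> j = j0 then 1 else 0) else 0)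
         - (if k = j then (if i = i0 \<and> j0 = j then 1 else 0) else (0::'a)))"
      using ij by (intro sum.cong refl) (auto simp: tmat_def)
    also have "\<dots> = (if i = j then 1 else 0)" using i j by (simp add: sum_subtractf sum.delta)
    finally show "(\<Sum>k<n. ?h i k * tmat i0 j0 k j) = (if i = j then 1 else 0)" .
  qed
  thus ?thesis unfolding GL_def mem_Collect_eq by (rule exI[of _ ?h])
qed

definition dl :: "nat set \<times> nat set \<Rightarrow> ('a::comm_ring_1) tensor" where
  "dl P = (\<lambda>x. if x = P then 1 else 0)"

lemma dl_W: "P \<in> idx n a \<times> idx n b \<Longrightarrow> dl P \<in> W n a b"
  by (auto simp: W_mem dl_def)

lemma rho_dl:
  assumes P: "P \<in> idx n a \<times> idx n b"
  shows "rho n a b g (dl P) Q = (if Q \<in> idx n a \<times> idx n b then minor g (fst Q) (fst P) * minor g (snd Q) (snd P) else 0)"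
proof -
  have "(\<Sum>P'\<in>idx n a \<times> idx n b. minor g (fst Q) (fst P') * minor g (snd Q) (snd P') * dl P P') =
        minor g (fst Q) (fst P) * minor g (snd Q) (snd P) * dl P P"
    by (rule sum_single) (use P finite_idx in \<open>auto simp: dl_def\<close>)
  thus ?thesis by (simp add: rho_alt dl_def)
qed

lemma delta_dl:
  assumes P: "P \<in> idx n a \<times> idx n b"
  shows "delta n a b t (dl P) Q = delta_basis t (fst P) (snd P) Q"
proof -
  have "(\<Sum>P'\<in>idx n a \<times> idx n b. dl P P' * delta_basis t (fst P') (snd P') Q) =
        dl P P * delta_basis t (fst P) (snd P) Q"
    by (rule sum_single) (use P finite_idx in \<open>auto simp: dl_def\<close>)
  thus ?thesis by (simp add: delta_alt dl_def)
qed

lemma Phi_dl: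
  assumes P: "P \<in> idx n a \<times> idx n b" and Q: "Q \<in> idx n a \<times> idx n b" and t: "t \<le> b"
  shows "Phi n a b t (dl P) Q = (\<Sum>C\<in>{C\<in>Pow (snd Q). card C = t \<and> fst Q \<inter> C = {}}.
      delta_basis t (fst P) (snd P) (fst Q \<union> C, snd Q - C) * (sgn2 (fst Q) C * sgn2 C (snd Q - C)))"
proof -
  have "Phi n a b t (dl P) Q = (\<Sum>P'\<in>idx n (a+t) \<times> idx n (b-t). delta_basis t (fst P) (snd P) P' * theta_basis a (fst P') (snd P') (fst Q, snd Q))"
    by (simp add: Phi_def theta_alt delta_dl[OF P])
  also have "\<dots> = (\<Sum>C\<in>{C\<in>Pow (snd Q). card C = t \<and> fst Q \<inter> C = {}}.
      delta_basis t (fst P) (snd P) (fst Q \<union> C, snd Q - C) * (sgn2 (fst Q) C * sgn2 C (snd Q - C)))"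
    by (rule theta_rhs) (use Q t in auto)
  finally show ?thesis .
qed

lemma sgn2_nz: "sgn2 A B \<noteq> (0::'a::comm_ring_1)"
  using sgn2_sq[of A B, where 'a='a] by auto

lemma phi_low:
  fixes S0 T0 :: "nat set"
  assumes P: "(S0,T0) \<in> idx n a \<times> idx n b" and dj: "S0 \<inter> T0 = {}"
    and Q: "(A',B') \<in> idx n a \<times> idx n b" and t: "t \<le> b" and lt: "t < card (A' \<inter> T0)"
  shows "Phi n a b t (dl (S0,T0)) (A',B') = (0::'a::comm_ring_1)"
proof -
  have fT0: "finite T0" using P idx_finite by auto
  have "(Phi n a b t (dl (S0,T0)) (A',B') :: 'a) = (\<Sum>C\<in>{C\<in>Pow B'. card C = t \<and> A' \<inter> C = {}}.
      delta_basis t S0 T0 (A' \<union> C, B' - C) * (sgn2 A' C * sgn2 C (B' - C)))"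
    using Phi_dl[OF P Q t] by simp
  also have "\<dots> = 0"
  proof (rule sum.neutral, rule ballI)
    fix C assume C: "C \<in> {C\<in>Pow B'. card C = t \<and> A' \<inter> C = {}}"
    show "(delta_basis t S0 T0 (A' \<union> C, B' - C) * (sgn2 A' C * sgn2 C (B' - C)) :: 'a) = 0"
    proof (rule ccontr)
      assume "(delta_basis t S0 T0 (A' \<union> C, B' - C) * (sgn2 A' C * sgn2 C (B' - C)) :: 'a) \<noteq> 0"
      hence "delta_basis t S0 T0 (A' \<union> C, B' - C) \<noteq> (0::'a)" by auto
      hence c: "B' - C \<subseteq> T0" "card (T0 - (B' - C)) = t" "A' \<union> C = S0 \<union> (T0 - (B' - C))"
        using delta_basis_closed[OF fT0, of t S0 "A' \<union> C" "B' - C", where 'a='a] by (auto split: if_splits)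
      have "A' \<inter> T0 \<subseteq> T0 - (B' - C)" using c(3) dj by blast
      hence "card (A' \<inter> T0) \<le> t" using c(2) fT0 by (metis card_mono finite_Diff)
      thus False using lt by simp
    qed
  qed
  finally show ?thesis .
qed

lemma phi_diag:
  fixes S0 T0 :: "nat set"
  assumes P: "(S0,T0) \<in> idx n a \<times> idx n b" and dj: "S0 \<inter> T0 = {}"
    and A': "A' \<subseteq> S0 \<union> T0" "card A' = a" and s: "s = card (A' \<inter> T0)"
  shows "Phi n a b s (dl (S0,T0)) (A', (S0 \<union> T0) - A') \<noteq> (0::'a::comm_ring_1)"
proof -
  let ?B' = "(S0 \<union> T0) - A'"
  have fS0: "finite S0" and fT0: "finite T0" using P idx_finite by auto
  have cS0: "card S0 = a" and cT0: "card T0 = b" and sub: "S0 \<subseteq> {..<n}" "T0 \<subseteq> {..<n}" using P by (auto simp: idx_mem)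
  have fA': "finite A'" using A' fS0 fT0 finite_subset by auto
  have splitA: "A' = (A' \<inter> S0) \<union> (A' \<inter> T0)" using A' by auto
  have cAS: "card (A' \<inter> S0) + s = a"
    using A'(2) s card_Un_disjoint[of "A' \<inter> S0" "A' \<inter> T0"] fA' dj splitA by (metis Int_assoc inf_bot_right inf_commute finite_Int)
  have sb: "s \<le> b" using s cT0 fT0 by (metis card_mono inf_le2)
  let ?C0 = "S0 - A'"
  have cC0: "card ?C0 = s" using cAS cS0 fS0 card_Diff_subset_Int[of S0 A'] by (simp add: Int_commute)
  have cB': "card ?B' = b"
  proof -
    have "card (S0 \<union> T0) = a + b" using cS0 cT0 fS0 fT0 dj by (simp add: card_Un_disjoint)
    thus ?thesis using A' fA' by (simp add: card_Diff_subset)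
  qed
  have Q: "(A', ?B') \<in> idx n a \<times> idx n b" using A' sub cB' by (auto simp: idx_mem)
  let ?K = "{C\<in>Pow ?B'. card C = s \<and> A' \<inter> C = {}}"
  let ?f = "\<lambda>C. delta_basis s S0 T0 (A' \<union> C, ?B' - C) * (sgn2 A' C * sgn2 C (?B' - C)) :: 'a"
  have "Phi n a b s (dl (S0,T0)) (A', ?B') = sum ?f ?K"
    using Phi_dl[OF P Q sb] by simp
  also have "\<dots> = ?f ?C0"
  proof (rule sum_single)
    show "finite ?K" using fS0 fT0 by auto
    show "?C0 \<in> ?K" using cC0 by auto
    fix C assume C: "C \<in> ?K" "C \<noteq> ?C0"
    show "?f C = 0"
    proof (rule ccontr)
      assume "?f C \<noteq> 0"
      hence "delta_basis s S0 T0 (A' \<union> C, ?B' - C) \<noteq> (0::'a)" by auto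
      hence c: "?B' - C \<subseteq> T0"
        using delta_basis_closed[OF fT0, of s S0 "A' \<union> C" "?B' - C", where 'a='a] by (auto split: if_splits)
      have "?C0 \<subseteq> C" using c dj by blast
      moreover have "finite C" using C fS0 fT0 finite_subset by auto
      moreover have "card C = s" using C by auto
      ultimately have "?C0 = C" using cC0 card_subset_eq[of C ?C0] by simp
      thus False using C by simp
    qed
  qed
  also have "?f ?C0 \<noteq> 0"
  proof -
    have e1: "?B' - ?C0 = T0 - A'" using dj by auto
    have e2: "T0 - (T0 - A') = T0 \<inter> A'" by auto
    have e3: "A' \<union> ?C0 = S0 \<union> (T0 \<inter> A')" using A' by auto
    have "card (T0 \<inter> A') = s" using s by (simp add: Int_commute)
    have "delta_basis s S0 T0 (A' \<union> ?C0, ?B' - ?C0) = (delta_basis s S0 T0 (S0 \<union> (T0 \<inter> A'), T0 - A') :: 'a)"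
      by (simp only: e1 e3)
    also have "\<dots> = sgn2 (T0 \<inter> A') (T0 - A') * sgn2 S0 (T0 \<inter> A')"
      using delta_basis_closed[OF fT0, of s S0 "S0 \<union> (T0 \<inter> A')" "T0 - A'", where 'a='a, unfolded e2]
        \<open>card (T0 \<inter> A') = s\<close> dj by auto
    finally have "delta_basis s S0 T0 (A' \<union> ?C0, ?B' - ?C0) = (sgn2 (T0 \<inter> A') (T0 - A') * sgn2 S0 (T0 \<inter> A') :: 'a)" .
    moreover have "sgn2 X Y * sgn2 X' Y' * (sgn2 X'' Y'' * sgn2 X''' Y''') \<noteq> (0::'a)" for X Y X' Y' X'' Y'' X''' Y'''
    proof
      assume z: "sgn2 X Y * sgn2 X' Y' * (sgn2 X'' Y'' * sgn2 X''' Y''') = (0::'a)"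
      have "(sgn2 X Y * sgn2 X' Y' * (sgn2 X'' Y'' * sgn2 X''' Y''')) * (sgn2 X Y * sgn2 X' Y' * (sgn2 X'' Y'' * sgn2 X''' Y''')) = (1::'a)"
        using sgn2_sq[of X Y, where 'a='a] sgn2_sq[of X' Y', where 'a='a] sgn2_sq[of X'' Y'', where 'a='a] sgn2_sq[of X''' Y''', where 'a='a]
        by (simp add: algebra_simps)
      thus False using z by simp
    qed
    ultimately show ?thesis by simp
  qed
  finally show ?thesis .
qed

lemma perm_glue:
  fixes labX labY :: "nat \<Rightarrow> 'l"
  assumes cnt: "\<And>l. card {x. x < n \<and> labX x = l} = card {x. x < n \<and> labY x = l}"
  shows "\<exists>\<pi>. bij_betw \<pi> {..<n} {..<n} \<and> (\<forall>x<n. labY (\<pi> x) = labX x)"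
proof -
  have "\<forall>l. \<exists>f. bij_betw f {x. x < n \<and> labX x = l} {x. x < n \<and> labY x = l}"
  proof
    fix l show "\<exists>f. bij_betw f {x. x < n \<and> labX x = l} {x. x < n \<and> labY x = l}"
      by (rule finite_same_card_bij) (use cnt in auto)
  qed
  then obtain f where f: "\<And>l. bij_betw (f l) {x. x < n \<and> labX x = l} {x. x < n \<and> labY x = l}"
    by metis
  define \<pi> where "\<pi> = (\<lambda>x. f (labX x) x)"
  have mem: "\<And>x. x < n \<Longrightarrow> \<pi> x < n \<and> labY (\<pi> x) = labX x"
  proof -
    fix x assume "x < n"
    hence "f (labX x) x \<in> {z. z < n \<and> labY z = labX x}"
      using f[of "labX x"] by (auto simp: bij_betw_def)
    thus "\<pi> x < n \<and> labY (\<pi> x) = labX x" by (simp add: \<pi>_def)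
  qed
  have inj: "inj_on \<pi> {..<n}"
  proof
    fix x y assume x: "x \<in> {..<n}" and y: "y \<in> {..<n}" and e: "\<pi> x = \<pi> y"
    have l: "labX x = labX y" using mem[of x] mem[of y] x y e by auto
    have "f (labX x) x = f (labX x) y" using e l by (simp add: \<pi>_def)
    thus "x = y" using f[of "labX x"] x y l by (auto simp: bij_betw_def inj_on_def)
  qed
  have im: "\<pi> ` {..<n} = {..<n}"
  proof
    show "\<pi> ` {..<n} \<subseteq> {..<n}" using mem by auto
    show "{..<n} \<subseteq> \<pi> ` {..<n}"
    proof
      fix y assume y: "y \<in> {..<n}"
      hence "y \<in> f (labY y) ` {x. x < n \<and> labX x = labY y}"
        using f[of "labY y"] by (auto simp: bij_betw_def)
      then obtain x where x: "x < n" "labX x = labY y" "y = f (labY y) x" by auto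
      hence "y = \<pi> x" by (simp add: \<pi>_def)
      thus "y \<in> \<pi> ` {..<n}" using x by auto
    qed
  qed
  show ?thesis using inj im mem by (auto simp: bij_betw_def)
qed

lemma perm_image:
  assumes bij: "bij_betw \<pi> {..<n} {..<n}" and U: "U \<subseteq> {..<n}" and U': "U' \<subseteq> {..<n}"
    and lab: "\<And>x. x < n \<Longrightarrow> (\<pi> x \<in> U') = (x \<in> U)"
  shows "\<pi> ` U = U'"
proof
  show "\<pi> ` U \<subseteq> U'" using U lab by auto
  show "U' \<subseteq> \<pi> ` U"
  proof
    fix y assume y: "y \<in> U'"
    hence "y \<in> \<pi> ` {..<n}" using U' bij by (auto simp: bij_betw_def)
    then obtain x where "x < n" "y = \<pi> x" by auto
    thus "y \<in> \<pi> ` U" using lab y by auto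
  qed
qed

lemma count2:
  assumes S: "S \<subseteq> {..<n}" and T: "T \<subseteq> {..<n}"
  shows "card {x. x < n \<and> (x \<in> S, x \<in> T) = l} = (case l of
     (True, True) \<Rightarrow> card (S \<inter> T) | (True, False) \<Rightarrow> card S - card (S \<inter> T)
   | (False, True) \<Rightarrow> card T - card (S \<inter> T) | (False, False) \<Rightarrow> n - (card S + card T - card (S \<inter> T)))"
proof -
  have fS: "finite S" and fT: "finite T" using S T finite_subset by auto
  obtain p q where l: "l = (p, q)" by (cases l)
  show ?thesis
  proof (cases p; cases q)
    assume "p" "q"
    hence "{x. x < n \<and> (x \<in> S, x \<in> T) = l} = S \<inter> T" using l S by auto
    thus ?thesis using l \<open>p\<close> \<open>q\<close> by simp
  next
    assume "p" "\<not> q"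
    hence "{x. x < n \<and> (x \<in> S, x \<in> T) = l} = S - (S \<inter> T)" using l S by auto
    thus ?thesis using l \<open>p\<close> \<open>\<not> q\<close> fS by (simp add: card_Diff_subset)
  next
    assume "\<not> p" "q"
    hence "{x. x < n \<and> (x \<in> S, x \<in> T) = l} = T - (S \<inter> T)" using l T by auto
    thus ?thesis using l \<open>\<not> p\<close> \<open>q\<close> fT by (simp add: card_Diff_subset)
  next
    assume "\<not> p" "\<not> q"
    hence "{x. x < n \<and> (x \<in> S, x \<in> T) = l} = {..<n} - (S \<union> T)" using l by auto
    moreover have "card (S \<union> T) = card S + card T - card (S \<inter> T)"
      using card_Un_Int[OF fS fT] by simp
    moreover have "card ({..<n} - (S \<union> T)) = n - card (S \<union> T)"
      using card_Diff_subset[of "S \<union> T" "{..<n}"] fS fT S T by simp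
    ultimately show ?thesis using l \<open>\<not> p\<close> \<open>\<not> q\<close> by simp
  qed
qed

lemma count3:
  assumes S: "S0 \<subseteq> {..<n}" and T: "T0 \<subseteq> {..<n}" and dj: "S0 \<inter> T0 = {}" and A: "A \<subseteq> S0 \<union> T0"
  shows "card {x. x < n \<and> (x \<in> S0, x \<in> T0, x \<in> A) = l} = (case l of
     (True, False, True) \<Rightarrow> card A - card (A \<inter> T0) | (True, False, False) \<Rightarrow> card S0 - (card A - card (A \<inter> T0))
   | (False, True, True) \<Rightarrow> card (A \<inter> T0) | (False, True, False) \<Rightarrow> card T0 - card (A \<inter> T0)
   | (False, False, False) \<Rightarrow> n - (card S0 + card T0) | _ \<Rightarrow> 0)"
proof -
  have fS: "finite S0" and fT: "finite T0" using S T finite_subset by auto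
  have fA: "finite A" using A fS fT finite_subset by auto
  have cAS: "card (A \<inter> S0) = card A - card (A \<inter> T0)"
  proof -
    have "A = (A \<inter> S0) \<union> (A \<inter> T0)" using A by auto
    hence "card A = card (A \<inter> S0) + card (A \<inter> T0)"
      using card_Un_disjoint[of "A \<inter> S0" "A \<inter> T0"] fA dj by auto
    thus ?thesis by simp
  qed
  obtain p q r where l: "l = (p, q, r)" by (cases l) auto
  show ?thesis
  proof (cases p; cases q; cases r)
    assume "p" "q" "r" thus ?thesis using l dj by auto
  next
    assume "p" "q" "\<not> r" thus ?thesis using l dj by auto
  next
    assume "p" "\<not> q" "r"
    hence "{x. x < n \<and> (x \<in> S0, x \<in> T0, x \<in> A) = l} = A \<inter> S0" using l S dj by auto
    thus ?thesis using l \<open>p\<close> \<open>\<not> q\<close> \<open>r\<close> cAS by simp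
  next
    assume "p" "\<not> q" "\<not> r"
    hence "{x. x < n \<and> (x \<in> S0, x \<in> T0, x \<in> A) = l} = S0 - (A \<inter> S0)" using l S dj by auto
    thus ?thesis using l \<open>p\<close> \<open>\<not> q\<close> \<open>\<not> r\<close> cAS fS by (simp add: card_Diff_subset)
  next
    assume "\<not> p" "q" "r"
    hence "{x. x < n \<and> (x \<in> S0, x \<in> T0, x \<in> A) = l} = A \<inter> T0" using l T dj by auto
    thus ?thesis using l \<open>\<not> p\<close> \<open>q\<close> \<open>r\<close> by simp
  next
    assume "\<not> p" "q" "\<not> r"
    hence "{x. x < n \<and> (x \<in> S0, x \<in> T0, x \<in> A) = l} = T0 - (A \<inter> T0)" using l T dj by auto
    thus ?thesis using l \<open>\<not> p\<close> \<open>q\<close> \<open>\<not> r\<close> fT by (simp add: card_Diff_subset)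
  next
    assume "\<not> p" "\<not> q" "r"
    hence "{x. x < n \<and> (x \<in> S0, x \<in> T0, x \<in> A) = l} = {}" using l A by auto
    thus ?thesis using l \<open>\<not> p\<close> \<open>\<not> q\<close> \<open>r\<close> by simp
  next
    assume "\<not> p" "\<not> q" "\<not> r"
    hence "{x. x < n \<and> (x \<in> S0, x \<in> T0, x \<in> A) = l} = {..<n} - (S0 \<union> T0)" using l A by auto
    moreover have "card ({..<n} - (S0 \<union> T0)) = n - card (S0 \<union> T0)"
      using card_Diff_subset[of "S0 \<union> T0" "{..<n}"] fS fT S T by simp
    ultimately show ?thesis using l \<open>\<not> p\<close> \<open>\<not> q\<close> \<open>\<not> r\<close> fS fT dj by (simp add: card_Un_disjoint)
  qed
qed

lemma rho_W: "rho n a b g f \<in> W n a b"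
  by (simp add: W_mem rho_alt)

lemma pimg_idx:
  assumes bij: "bij_betw \<pi> {..<n} {..<n}" and S: "S \<in> idx n k"
  shows "\<pi> ` S \<in> idx n k"
proof -
  have Ss: "S \<subseteq> {..<n}" and c: "card S = k" using S by (auto simp: idx_mem)
  have inj: "inj_on \<pi> S" using bij Ss by (auto simp: bij_betw_def intro: inj_on_subset)
  have "\<pi> ` S \<subseteq> {..<n}" using bij Ss by (auto simp: bij_betw_def)
  thus ?thesis using card_image[OF inj] c by (simp add: idx_mem)
qed

lemma rho_pmat_dl:
  assumes bij: "bij_betw \<pi> {..<n} {..<n}" and P: "(S',T') \<in> idx n a \<times> idx n b"
  shows "rho n a b (pmat \<pi>) (dl (S',T')) =
    (\<lambda>Q. ((-1)^ninv \<pi> S' * (-1)^ninv \<pi> T') * (dl (\<pi> ` S', \<pi> ` T') Q :: 'a::comm_ring_1))"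
proof
  fix Q
  have fS: "finite S'" and fT: "finite T'" using P idx_finite by auto
  have iS: "inj_on \<pi> S'" and iT: "inj_on \<pi> T'" using bij P
    by (auto simp: bij_betw_def idx_mem intro: inj_on_subset)
  have PI: "(\<pi> ` S', \<pi> ` T') \<in> idx n a \<times> idx n b" using pimg_idx[OF bij] P by auto
  show "rho n a b (pmat \<pi>) (dl (S',T')) Q = ((-1)^ninv \<pi> S' * (-1)^ninv \<pi> T') * (dl (\<pi> ` S', \<pi> ` T') Q :: 'a)"
  proof -
    have "rho n a b (pmat \<pi>) (dl (S',T')) Q = (if Q \<in> idx n a \<times> idx n b then
       minor (pmat \<pi>) (fst Q) S' * minor (pmat \<pi>) (snd Q) T' else (0::'a))"
      by (simp add: rho_dl[OF P])
    also have "\<dots> = (if Q \<in> idx n a \<times> idx n b then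
       (if fst Q = \<pi> ` S' then (-1)^ninv \<pi> S' else 0) * (if snd Q = \<pi> ` T' then (-1)^ninv \<pi> T' else 0) else (0::'a))"
      by (simp only: minor_pmat[OF fS iS] minor_pmat[OF fT iT])
    also have "\<dots> = ((-1)^ninv \<pi> S' * (-1)^ninv \<pi> T') * (dl (\<pi> ` S', \<pi> ` T') Q :: 'a)"
      using PI by (cases Q) (auto simp: dl_def)
    finally show ?thesis .
  qed
qed

lemma rho_tmat_dl:
  assumes P: "(S,T) \<in> idx n a \<times> idx n b" and i0S: "i0 \<in> S" and j0S: "j0 \<notin> S"
    and j0T: "j0 \<in> T" and i0T: "i0 \<notin> T" and i0n: "i0 < n"
  shows "rho n a b (tmat i0 j0) (dl (S,T)) =
    (\<lambda>Q. dl (S,T) Q + (-1)^ninv (\<lambda>x. if x = j0 then i0 else x) T * (dl (S, insert i0 (T - {j0})) Q :: 'a::comm_ring_1))"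
proof
  fix Q
  have fS: "finite S" and fT: "finite T" using P idx_finite by auto
  have PI: "(S, insert i0 (T - {j0})) \<in> idx n a \<times> idx n b"
  proof -
    have "card T > 0" using fT j0T card_gt_0_iff by auto
    hence "card (insert i0 (T - {j0})) = card T" using fT j0T i0T by (simp add: card_Diff_singleton)
    thus ?thesis using P i0n by (auto simp: idx_mem)
  qed
  have ne: "insert i0 (T - {j0}) \<noteq> T" using i0T by auto
  show "rho n a b (tmat i0 j0) (dl (S,T)) Q = dl (S,T) Q + (-1)^ninv (\<lambda>x. if x = j0 then i0 else x) T * (dl (S, insert i0 (T - {j0})) Q :: 'a)"
  proof -
    have "rho n a b (tmat i0 j0) (dl (S,T)) Q = (if Q \<in> idx n a \<times> idx n b then
       minor (tmat i0 j0) (fst Q) S * minor (tmat i0 j0) (snd Q) T else (0::'a))"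
      by (simp add: rho_dl[OF P])
    also have "\<dots> = (if Q \<in> idx n a \<times> idx n b then
       (if fst Q = S then 1 else 0) * ((if snd Q = T then 1 else 0) + (if snd Q = insert i0 (T - {j0}) then (-1)^ninv (\<lambda>x. if x = j0 then i0 else x) T else 0)) else (0::'a))"
      by (simp only: minor_tmat_out[OF fS j0S] minor_tmat_in[OF fT j0T i0T])
    also have "\<dots> = dl (S,T) Q + (-1)^ninv (\<lambda>x. if x = j0 then i0 else x) T * (dl (S, insert i0 (T - {j0})) Q :: 'a)"
      using PI P ne by (cases Q) (auto simp: dl_def)
    finally show ?thesis .
  qed
qed

lemma rho_dmat:
  assumes u: "u \<in> W n a b"
  shows "rho n a b (dmat j) u Q = (if Q \<in> idx n a \<times> idx n b then
     ((if j \<in> fst Q then 2 else 1) * (if j \<in> snd Q then 2 else 1)) * u Q else (0::'a::field))"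
proof (cases "Q \<in> idx n a \<times> idx n b")
  case True
  have fQ: "finite (fst Q)" "finite (snd Q)" using True idx_finite by auto
  have "(\<Sum>P\<in>idx n a \<times> idx n b. minor (dmat j) (fst Q) (fst P) * minor (dmat j) (snd Q) (snd P) * u P) =
     minor (dmat j) (fst Q) (fst Q) * minor (dmat j) (snd Q) (snd Q) * (u Q :: 'a)"
  proof (rule sum_single[OF _ True])
    show "finite (idx n a \<times> idx n b)" using finite_idx by simp
    fix P assume P: "P \<in> idx n a \<times> idx n b" "P \<noteq> Q"
    have fP: "finite (fst P)" "finite (snd P)" using P idx_finite by auto
    show "minor (dmat j) (fst Q) (fst P) * minor (dmat j) (snd Q) (snd P) * (u P :: 'a) = 0"
      using P(2) unfolding minor_dmat[OF fP(1)] minor_dmat[OF fP(2)] by (cases P; cases Q) auto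
  qed
  thus ?thesis using True by (simp add: rho_alt minor_dmat[OF fQ(1)] minor_dmat[OF fQ(2)])
qed (simp add: rho_alt)

lemma rho_pmat_zero:
  assumes bij: "bij_betw \<pi> {..<n} {..<n}"
    and z: "\<And>P. P \<in> idx n a \<times> idx n b \<Longrightarrow> \<pi> ` fst P = fst Q \<Longrightarrow> \<pi> ` snd P = snd Q \<Longrightarrow> u P = 0"
  shows "rho n a b (pmat \<pi>) u Q = (0::'a::comm_ring_1)"
  unfolding rho_alt
proof (simp, intro impI sum.neutral ballI)
  fix P assume P: "P \<in> idx n a \<times> idx n b"
  have fP: "finite (fst P)" "finite (snd P)" using P idx_finite by auto
  have iP: "inj_on \<pi> (fst P)" "inj_on \<pi> (snd P)" using bij P
    by (auto simp: bij_betw_def idx_mem intro: inj_on_subset)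
  show "minor (pmat \<pi>) (fst Q) (fst P) * minor (pmat \<pi>) (snd Q) (snd P) * (u P :: 'a) = 0"
    unfolding minor_pmat[OF fP(1) iP(1)] minor_pmat[OF fP(2) iP(2)] using z[OF P] by auto
qed

lemma rho_lin:
  "rho n a b g (\<lambda>y. u y - (\<Sum>t\<le>m. c t * v t y)) =
   (\<lambda>x. rho n a b g u x - (\<Sum>t\<le>m. c t * rho n a b g (v t) x :: 'a::comm_ring_1))"
proof
  fix x
  let ?I = "idx n a \<times> idx n b"
  let ?m = "\<lambda>P. minor g (fst x) (fst P) * minor g (snd x) (snd P)"
  show "rho n a b g (\<lambda>y. u y - (\<Sum>t\<le>m. c t * v t y)) x = rho n a b g u x - (\<Sum>t\<le>m. c t * rho n a b g (v t) x)"
  proof (cases "x \<in> ?I")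
    case True
    have "(\<Sum>P\<in>?I. ?m P * (u P - (\<Sum>t\<le>m. c t * v t P))) =
        (\<Sum>P\<in>?I. ?m P * u P) - (\<Sum>P\<in>?I. \<Sum>t\<le>m. c t * (?m P * v t P))"
      by (simp add: right_diff_distrib sum_subtractf sum_distrib_left ac_simps)
    also have "(\<Sum>P\<in>?I. \<Sum>t\<le>m. c t * (?m P * v t P)) = (\<Sum>t\<le>m. \<Sum>P\<in>?I. c t * (?m P * v t P))"
      by (rule sum.swap)
    also have "\<dots> = (\<Sum>t\<le>m. c t * (\<Sum>P\<in>?I. ?m P * v t P))"
      by (simp add: sum_distrib_left)
    finally show ?thesis using True by (simp add: rho_alt)
  qed (simp add: rho_alt)
qed

lemma rho_scale: "rho n a b g (\<lambda>y. c * u y) = (\<lambda>x. c * rho n a b g u x :: 'a::comm_ring_1)"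
  by (rule ext) (simp add: rho_alt sum_distrib_left ac_simps)

lemma tri_indep:
  fixes phi :: "nat \<Rightarrow> nat \<Rightarrow> 'a::field"
  assumes low: "\<And>s t. s \<le> b \<Longrightarrow> t < s \<Longrightarrow> phi t s = 0"
    and diag: "\<And>s. s \<le> b \<Longrightarrow> phi s s \<noteq> 0"
    and eq: "\<And>s. s \<le> b \<Longrightarrow> (\<Sum>t\<le>b. c t * phi t s) = 0"
  shows "\<forall>t\<le>b. c t = 0"
proof -
  have "c s = 0" if "s \<le> b" for s
    using that
  proof (induction "b - s" arbitrary: s rule: less_induct)
    case less
    have "(\<Sum>t\<le>b. c t * phi t s) = c s * phi s s"
    proof (rule sum_single)
      show "finite {..b}" by simp
      show "s \<in> {..b}" using less.prems by simp
      fix t assume t: "t \<in> {..b}" "t \<noteq> s"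
      show "c t * phi t s = 0"
      proof (cases "t < s")
        case True thus ?thesis using low[OF less.prems] by simp
      next
        case False
        hence "b - t < b - s" using t less.prems by auto
        hence "c t = 0" using less.hyps[of t] t by auto
        thus ?thesis by simp
      qed
    qed
    hence "c s * phi s s = 0" using eq[OF less.prems] by simp
    thus "c s = 0" using diag[OF less.prems] by simp
  qed
  thus ?thesis by blast
qed

lemma tri_solve:
  fixes phi :: "nat \<Rightarrow> nat \<Rightarrow> 'a::field"
  assumes low: "\<And>s t. s \<le> b \<Longrightarrow> t < s \<Longrightarrow> phi t s = 0"
    and diag: "\<And>s. s \<le> b \<Longrightarrow> phi s s \<noteq> 0"
  shows "\<exists>c. \<forall>s\<le>b. (\<Sum>t\<le>b. c t * phi t s) = y s"
proof -
  have "\<exists>c. \<forall>s. s \<le> b \<and> b < s + m \<longrightarrow> (\<Sum>t\<le>b. c t * phi t s) = y s" for m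
  proof (induction m)
    case 0 show ?case by auto
  next
    case (Suc m)
    then obtain c where c: "\<And>s. s \<le> b \<Longrightarrow> b < s + m \<Longrightarrow> (\<Sum>t\<le>b. c t * phi t s) = y s" by blast
    show ?case
    proof (cases "m \<le> b")
      case False
      thus ?thesis using c by (intro exI[of _ c]) auto
    next
      case True
      define s0 where "s0 = b - m"
      have s0: "s0 \<le> b" using True by (simp add: s0_def)
      define dd where "dd = (y s0 - (\<Sum>t\<le>b. c t * phi t s0)) / phi s0 s0"
      define c' where "c' = (\<lambda>t. c t + (if t = s0 then dd else 0))"
      have sum': "(\<Sum>t\<le>b. c' t * phi t s) = (\<Sum>t\<le>b. c t * phi t s) + dd * phi s0 s" for s
      proof -
        have "(\<Sum>t\<le>b. c' t * phi t s) = (\<Sum>t\<le>b. c t * phi t s + (if t = s0 then dd * phi t s else 0))"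
          by (intro sum.cong refl) (simp add: c'_def distrib_right)
        also have "\<dots> = (\<Sum>t\<le>b. c t * phi t s) + (\<Sum>t\<le>b. if t = s0 then dd * phi t s else 0)"
          by (rule sum.distrib)
        also have "(\<Sum>t\<le>b. if t = s0 then dd * phi t s else 0) = dd * phi s0 s"
          using s0 by (simp add: sum.delta)
        finally show ?thesis .
      qed
      have "\<forall>s. s \<le> b \<and> b < s + Suc m \<longrightarrow> (\<Sum>t\<le>b. c' t * phi t s) = y s"
      proof (intro allI impI)
        fix s assume s: "s \<le> b \<and> b < s + Suc m"
        show "(\<Sum>t\<le>b. c' t * phi t s) = y s"
        proof (cases "s = s0")
          case True
          thus ?thesis using sum' diag[OF s0] by (simp add: dd_def)
        next
          case False
          hence "b < s + m" "s0 < s" using s True by (auto simp: s0_def)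
          thus ?thesis using sum' c s low by simp
        qed
      qed
      thus ?thesis by blast
    qed
  qed
  from this[of "Suc b"] show ?thesis by auto
qed

definition TT :: "nat \<Rightarrow> nat \<Rightarrow> nat \<Rightarrow> nat set" where
  "TT a b k = {..<k} \<union> {a+k..<a+b}"

lemma TT_props:
  assumes "k \<le> b" "b \<le> a" "a + b \<le> n"
  shows "TT a b k \<in> idx n b" "{..<a} \<inter> TT a b k = {..<k}"
proof -
  have "card (TT a b k) = k + (b - k)"
    unfolding TT_def using assms by (subst card_Un_disjoint) auto
  thus "TT a b k \<in> idx n b" using assms by (auto simp: idx_mem TT_def)
  show "{..<a} \<inter> TT a b k = {..<k}" using assms by (auto simp: TT_def)
qed

lemma TT_step:
  assumes "k < b" "b \<le> a"
  shows "insert k (TT a b k - {a + k}) = TT a b (Suc k)" "k \<notin> TT a b k" "a + k \<in> TT a b k"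
  using assms by (auto simp: TT_def)

lemma neg1_sq: "(-1::'a::comm_ring_1)^m * (-1)^m = 1"
  by (simp add: power_add[symmetric] mult_2[symmetric] power_mult)

lemma generate:
  fixes Z :: "('a::comm_ring_1) tensor set"
  assumes ab: "b \<le> a" "a + b \<le> n"
    and Zadd: "\<And>f h. f \<in> Z \<Longrightarrow> h \<in> Z \<Longrightarrow> (\<lambda>x. f x + h x) \<in> Z"
    and Zsm: "\<And>c f. f \<in> Z \<Longrightarrow> (\<lambda>x. c * f x) \<in> Z"
    and Zrho: "\<And>g f. f \<in> Z \<Longrightarrow> g \<in> GL n \<Longrightarrow> rho n a b g f \<in> Z"
    and w: "dl ({..<a}, {a..<a+b}) \<in> Z"
  shows "W n a b \<subseteq> Z"
proof -
  let ?I = "idx n a \<times> idx n b"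
  have S0: "{..<a} \<in> idx n a" using ab by (auto simp: idx_mem)
  have unsc: "f \<in> Z" if "(\<lambda>x. ((-1)^m :: 'a) * f x) \<in> Z" for f m
  proof -
    have "(\<lambda>x. ((-1)^m :: 'a) * (((-1)^m :: 'a) * f x)) \<in> Z" using Zsm[OF that] .
    moreover have "(\<lambda>x. ((-1)^m :: 'a) * (((-1)^m :: 'a) * f x)) = f"
      by (rule ext) (simp add: mult.assoc[symmetric] neg1_sq)
    ultimately show ?thesis by simp
  qed
  have step1: "dl ({..<a}, TT a b k) \<in> Z" if "k \<le> b" for k
    using that
  proof (induction k)
    case 0
    have "TT a b 0 = {a..<a+b}" by (auto simp: TT_def)
    thus ?case using w by simp
  next
    case (Suc k)
    have kb: "k < b" using Suc.prems by simp
    have v: "dl ({..<a}, TT a b k) \<in> Z" using Suc.IH kb by simp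
    have P: "({..<a}, TT a b k) \<in> ?I" using S0 TT_props[of k b a n] kb ab by auto
    have r: "rho n a b (tmat k (a+k)) (dl ({..<a}, TT a b k)) =
      (\<lambda>Q. dl ({..<a}, TT a b k) Q + (-1)^ninv (\<lambda>x. if x = a + k then k else x) (TT a b k) * (dl ({..<a}, TT a b (Suc k)) Q :: 'a))"
      using rho_tmat_dl[OF P, of k "a + k"] TT_step[OF kb ab(1)] kb ab by auto
    have "rho n a b (tmat k (a+k)) (dl ({..<a}, TT a b k)) \<in> Z"
      by (rule Zrho[OF v tmat_GL]) (use kb ab in simp)
    hence "(\<lambda>x. rho n a b (tmat k (a+k)) (dl ({..<a}, TT a b k)) x + (-1) * dl ({..<a}, TT a b k) x) \<in> Z"
      using Zadd Zsm[OF v] by blast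
    also have "(\<lambda>x. rho n a b (tmat k (a+k)) (dl ({..<a}, TT a b k)) x + (-1) * dl ({..<a}, TT a b k) x) =
       (\<lambda>x. (-1)^ninv (\<lambda>x. if x = a + k then k else x) (TT a b k) * (dl ({..<a}, TT a b (Suc k)) x :: 'a))"
      unfolding r by auto
    finally show ?case by (rule unsc)
  qed
  have step2: "dl P \<in> Z" if P: "P \<in> ?I" for P
  proof -
    obtain S T where ST: "P = (S,T)" by (cases P)
    have S: "S \<subseteq> {..<n}" "card S = a" and T: "T \<subseteq> {..<n}" "card T = b" using P ST by (auto simp: idx_mem)
    have fT: "finite T" using T finite_subset by auto
    define d where "d = card (S \<inter> T)"
    have db: "d \<le> b" unfolding d_def using T fT by (metis card_mono inf_le2)
    have Td: "TT a b d \<in> idx n b" and STd: "{..<a} \<inter> TT a b d = {..<d}" using TT_props[OF db ab] by auto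
    have Tds: "TT a b d \<subseteq> {..<n}" "card (TT a b d) = b" using Td by (auto simp: idx_mem)
    have S0s: "{..<a} \<subseteq> {..<n}" using ab by auto
    obtain \<pi> where bij: "bij_betw \<pi> {..<n} {..<n}"
      and lab: "\<forall>x<n. (\<pi> x \<in> S, \<pi> x \<in> T) = (x \<in> {..<a}, x \<in> TT a b d)"
    proof -
      have "\<exists>\<pi>. bij_betw \<pi> {..<n} {..<n} \<and> (\<forall>x<n. (\<lambda>x. (x \<in> S, x \<in> T)) (\<pi> x) = (\<lambda>x. (x \<in> {..<a}, x \<in> TT a b d)) x)"
      proof (rule perm_glue)
        fix l
        show "card {x. x < n \<and> (x \<in> {..<a}, x \<in> TT a b d) = l} = card {x. x < n \<and> (x \<in> S, x \<in> T) = l}"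
          unfolding count2[OF S0s Tds(1)] count2[OF S(1) T(1)] STd Tds(2) using S T d_def by (auto split: prod.splits bool.splits)
      qed
      thus ?thesis using that by auto
    qed
    have im1: "\<pi> ` {..<a} = S" by (rule perm_image[OF bij S0s S(1)]) (use lab in auto)
    have im2: "\<pi> ` TT a b d = T" by (rule perm_image[OF bij Tds(1) T(1)]) (use lab in auto)
    have P0: "({..<a}, TT a b d) \<in> ?I" using S0 Td by auto
    have "rho n a b (pmat \<pi>) (dl ({..<a}, TT a b d)) \<in> Z"
      by (rule Zrho[OF step1[OF db] pmat_GL[OF bij]])
    hence "(\<lambda>Q. ((-1)^ninv \<pi> {..<a} * (-1)^ninv \<pi> (TT a b d)) * (dl (S, T) Q :: 'a)) \<in> Z"
      unfolding rho_pmat_dl[OF bij P0] im1 im2 .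
    hence "(\<lambda>Q. (-1)^(ninv \<pi> {..<a} + ninv \<pi> (TT a b d)) * (dl (S, T) Q :: 'a)) \<in> Z"
      by (simp add: power_add)
    thus ?thesis using ST unsc by blast
  qed
  show ?thesis
  proof
    fix f :: "'a tensor" assume f: "f \<in> W n a b"
    have fin: "finite ?I" using finite_idx by simp
    have comb: "(\<lambda>x. \<Sum>P\<in>A. f P * dl P x) \<in> Z" if "A \<subseteq> ?I" for A
    proof -
      have "finite A" using that fin finite_subset by auto
      thus ?thesis using that
      proof (induction A rule: finite_induct)
        case empty
        have "(\<lambda>x. 0 * dl ({..<a}, {a..<a+b}) x) \<in> Z" by (rule Zsm[OF w])
        thus ?case by simp
      next
        case (insert P A)
        have "(\<lambda>x. f P * dl P x) \<in> Z" using Zsm step2 insert.prems by auto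
        moreover have "(\<lambda>x. \<Sum>P\<in>A. f P * dl P x) \<in> Z" using insert by auto
        ultimately have "(\<lambda>x. f P * dl P x + (\<Sum>P\<in>A. f P * dl P x)) \<in> Z" by (rule Zadd)
        thus ?case using insert.hyps by simp
      qed
    qed
    have "f = (\<lambda>x. \<Sum>P\<in>?I. f P * dl P x)"
    proof
      fix x show "f x = (\<Sum>P\<in>?I. f P * dl P x)"
      proof (cases "x \<in> ?I")
        case True
        have "(\<Sum>P\<in>?I. f P * dl P x) = f x * dl x x"
          by (rule sum_single[OF fin True]) (auto simp: dl_def)
        thus ?thesis by (simp add: dl_def)
      next
        case False
        have "(\<Sum>P\<in>?I. f P * dl P x) = 0" using False by (intro sum.neutral) (auto simp: dl_def)
        thus ?thesis using f False unfolding W_mem by metis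
      qed
    qed
    thus "f \<in> Z" using comb[of ?I] by simp
  qed
qed

lemma lam_eq:
  assumes "((if p then 2 else 1) * (if q then 2 else 1) :: 'a::field_char_0) = (if p' then 2 else 1) * (if q' then 2 else 1)"
    and "\<not> (p' \<and> q')"
  shows "\<not> (p \<and> q) \<and> ((p \<or> q) = (p' \<or> q'))"
  using assms by (cases p; cases q; cases p'; cases q') simp_all

lemma rho_zero: "rho n a b g (\<lambda>x. 0) = (\<lambda>x. 0::'a::comm_ring_1)"
  by (rule ext) (simp add: rho_alt)

lemma As_props:
  assumes "s \<le> b" "b \<le> a"
  shows "{..<a - s} \<union> {a..<a+s} \<subseteq> {..<a} \<union> {a..<a+b}"
    "card ({..<a - s} \<union> {a..<a+s}) = a"
    "card (({..<a - s} \<union> {a..<a+s}) \<inter> {a..<a+b}) = s"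
proof -
  show "{..<a - s} \<union> {a..<a+s} \<subseteq> {..<a} \<union> {a..<a+b}" using assms by auto
  show "card ({..<a - s} \<union> {a..<a+s}) = a" using assms by (subst card_Un_disjoint) auto
  have "({..<a - s} \<union> {a..<a+s}) \<inter> {a..<a+b} = {a..<a+s}" using assms by auto
  thus "card (({..<a - s} \<union> {a..<a+s}) \<inter> {a..<a+b}) = s" by simp
qed

lemma main_indep_data:
  assumes ba: "b \<le> a" and abn: "a + b \<le> n" and s: "s \<le> b"
  defines "A \<equiv> {..<a - s} \<union> {a..<a+s}"
  shows "(A, ({..<a} \<union> {a..<a+b}) - A) \<in> idx n a \<times> idx n b"
    "\<And>t. t < s \<Longrightarrow> Phi n a b t (dl ({..<a}, {a..<a+b})) (A, ({..<a} \<union> {a..<a+b}) - A) = (0::'a::comm_ring_1)"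
    "Phi n a b s (dl ({..<a}, {a..<a+b})) (A, ({..<a} \<union> {a..<a+b}) - A) \<noteq> (0::'a::comm_ring_1)"
proof -
  have P0: "({..<a}, {a..<a+b}) \<in> idx n a \<times> idx n b" using abn by (auto simp: idx_mem)
  have dj: "{..<a} \<inter> {a..<a+b} = {}" by auto
  note Ap = As_props[OF s ba, folded A_def]
  have cU: "card ({..<a} \<union> {a..<a+b}) = a + b" by (subst card_Un_disjoint) auto
  show Q: "(A, ({..<a} \<union> {a..<a+b}) - A) \<in> idx n a \<times> idx n b"
  proof -
    have fA: "finite A" using Ap(1) by (rule finite_subset) simp
    have "card (({..<a} \<union> {a..<a+b}) - A) = b" using card_Diff_subset[OF fA Ap(1)] cU Ap(2) by simp
    moreover have "{..<a} \<union> {a..<a+b} \<subseteq> {..<n}" using abn by auto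
    ultimately show ?thesis using Ap by (auto simp: idx_mem)
  qed
  show "\<And>t. t < s \<Longrightarrow> Phi n a b t (dl ({..<a}, {a..<a+b})) (A, ({..<a} \<union> {a..<a+b}) - A) = (0::'a)"
    by (rule phi_low[OF P0 dj Q]) (use s Ap in auto)
  show "Phi n a b s (dl ({..<a}, {a..<a+b})) (A, ({..<a} \<union> {a..<a+b}) - A) \<noteq> (0::'a)"
    by (rule phi_diag[OF P0 dj]) (use Ap in auto)
qed

lemma w_zero:
  fixes F' :: "('a::field_char_0) tensor \<Rightarrow> 'a tensor"
  assumes ba: "b \<le> a" and abn: "a + b \<le> n"
    and F'W: "\<And>f. f \<in> W n a b \<Longrightarrow> F' f \<in> W n a b"
    and F'sm: "\<And>k f. f \<in> W n a b \<Longrightarrow> F' (\<lambda>x. k * f x) = (\<lambda>x. k * F' f x)"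
    and F'eq: "\<And>g f. g \<in> GL n \<Longrightarrow> f \<in> W n a b \<Longrightarrow> F' (rho n a b g f) = rho n a b g (F' f)"
    and rep: "\<And>s. s \<le> b \<Longrightarrow> F' (dl ({..<a}, {a..<a+b})) ({..<a - s} \<union> {a..<a+s}, ({..<a} \<union> {a..<a+b}) - ({..<a - s} \<union> {a..<a+s})) = 0"
  shows "F' (dl ({..<a}, {a..<a+b})) = (\<lambda>x. 0)"
proof
  let ?S0 = "{..<a}" and ?T0 = "{a..<a+b}"
  let ?I = "idx n a \<times> idx n b"
  let ?w = "dl (?S0, ?T0) :: 'a tensor"
  let ?u = "F' ?w"
  have P0: "(?S0, ?T0) \<in> ?I" using abn by (auto simp: idx_mem)
  have wW: "?w \<in> W n a b" by (rule dl_W[OF P0])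
  have uW: "?u \<in> W n a b" by (rule F'W[OF wW])
  fix Q
  show "?u Q = 0"
  proof (rule ccontr)
    assume nz: "?u Q \<noteq> 0"
    hence QI: "Q \<in> ?I" using uW unfolding W_mem by metis
    obtain S T where ST: "Q = (S,T)" by (cases Q)
    have S: "S \<subseteq> {..<n}" "card S = a" and T: "T \<subseteq> {..<n}" "card T = b" using QI ST by (auto simp: idx_mem)
    have wt: "\<not> (j \<in> S \<and> j \<in> T) \<and> ((j \<in> S \<or> j \<in> T) = (j \<in> ?S0 \<or> j \<in> ?T0))" for j
    proof -
      let ?l0 = "((if j \<in> ?S0 then 2 else 1) * (if j \<in> ?T0 then 2 else 1)) :: 'a"
      have rw: "rho n a b (dmat j) ?w = (\<lambda>x. ?l0 * ?w x)"
      proof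
        fix x show "rho n a b (dmat j) ?w x = ?l0 * ?w x"
          unfolding rho_dmat[OF wW] using P0 by (auto simp: dl_def)
      qed
      have "F' (rho n a b (dmat j) ?w) = (\<lambda>x. ?l0 * ?u x)" unfolding rw by (rule F'sm[OF wW])
      moreover have "F' (rho n a b (dmat j) ?w) = rho n a b (dmat j) ?u" by (rule F'eq[OF dmat_GL wW])
      ultimately have "?l0 * ?u Q = rho n a b (dmat j) ?u Q" by metis
      also have "\<dots> = ((if j \<in> S then 2 else 1) * (if j \<in> T then 2 else 1)) * ?u Q"
        unfolding rho_dmat[OF uW] using QI ST by simp
      finally have "?l0 = (if j \<in> S then 2 else 1) * (if j \<in> T then 2 else 1)" using nz by simp
      thus ?thesis using lam_eq[of "j \<in> S" "j \<in> T" "j \<in> ?S0" "j \<in> ?T0", where 'a='a] by auto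
    qed
    have STd: "S \<inter> T = {}" using wt by blast
    have STu: "S \<union> T = ?S0 \<union> ?T0" using wt by blast
    have SU: "S \<subseteq> ?S0 \<union> ?T0" using STu by blast
    have Teq: "T = (?S0 \<union> ?T0) - S" using STd STu by blast
    define s where "s = card (S \<inter> ?T0)"
    have sb: "s \<le> b" unfolding s_def by (metis card_atLeastLessThan card_mono finite_atLeastLessThan inf_le2 add_diff_cancel_left')
    let ?A = "{..<a - s} \<union> {a..<a+s}"
    note Ap = As_props[OF sb ba]
    have S0s: "?S0 \<subseteq> {..<n}" "?T0 \<subseteq> {..<n}" using abn by auto
    have dj: "?S0 \<inter> ?T0 = {}" by auto
    obtain \<pi> where bij: "bij_betw \<pi> {..<n} {..<n}"
      and lab: "\<forall>x<n. (\<pi> x \<in> ?S0, \<pi> x \<in> ?T0, \<pi> x \<in> S) = (x \<in> ?S0, x \<in> ?T0, x \<in> ?A)"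
    proof -
      have "\<exists>\<pi>. bij_betw \<pi> {..<n} {..<n} \<and> (\<forall>x<n. (\<lambda>x. (x \<in> ?S0, x \<in> ?T0, x \<in> S)) (\<pi> x) = (\<lambda>x. (x \<in> ?S0, x \<in> ?T0, x \<in> ?A)) x)"
      proof (rule perm_glue)
        fix l
        show "card {x. x < n \<and> (x \<in> ?S0, x \<in> ?T0, x \<in> ?A) = l} = card {x. x < n \<and> (x \<in> ?S0, x \<in> ?T0, x \<in> S) = l}"
          unfolding count3[OF S0s dj Ap(1)] count3[OF S0s dj SU] Ap(2,3) S(2) s_def[symmetric] by (auto split: prod.splits bool.splits)
      qed
      thus ?thesis using that by auto
    qed
    have imS0: "\<pi> ` ?S0 = ?S0" by (rule perm_image[OF bij S0s(1) S0s(1)]) (use lab in auto)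
    have imT0: "\<pi> ` ?T0 = ?T0" by (rule perm_image[OF bij S0s(2) S0s(2)]) (use lab in auto)
    have Asub: "?A \<subseteq> {..<n}" using Ap(1) S0s by auto
    have imA: "\<pi> ` ?A = S" by (rule perm_image[OF bij Asub S(1)]) (use lab in auto)
    have inj: "inj_on \<pi> {..<n}" using bij by (simp add: bij_betw_def)
    define \<sigma> where "\<sigma> = ((-1)^ninv \<pi> ?S0 * (-1)^ninv \<pi> ?T0 :: 'a)"
    have \<sigma>nz: "\<sigma> \<noteq> 0" unfolding \<sigma>_def by simp
    have rp: "rho n a b (pmat \<pi>) ?w = (\<lambda>x. \<sigma> * ?w x)"
      unfolding rho_pmat_dl[OF bij P0] imS0 imT0 \<sigma>_def ..
    have "F' (rho n a b (pmat \<pi>) ?w) = (\<lambda>x. \<sigma> * ?u x)" unfolding rp by (rule F'sm[OF wW])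
    moreover have "F' (rho n a b (pmat \<pi>) ?w) = rho n a b (pmat \<pi>) ?u" by (rule F'eq[OF pmat_GL[OF bij] wW])
    ultimately have "\<sigma> * ?u Q = rho n a b (pmat \<pi>) ?u Q" by metis
    also have "\<dots> = 0"
    proof (rule rho_pmat_zero[OF bij])
      fix P assume P: "P \<in> ?I" "\<pi> ` fst P = fst Q" "\<pi> ` snd P = snd Q"
      have Ps: "fst P \<subseteq> {..<n}" "snd P \<subseteq> {..<n}" using P by (auto simp: idx_mem)
      have "\<pi> ` fst P = \<pi> ` ?A" using P ST imA by simp
      hence fP: "fst P = ?A" using inj_on_image_eq_iff[OF inj Ps(1) Asub] by simp
      have U: "?S0 \<union> ?T0 \<subseteq> {..<n}" using S0s by auto
      have "\<pi> ` ((?S0 \<union> ?T0) - ?A) = \<pi> ` (?S0 \<union> ?T0) - \<pi> ` ?A"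
        by (rule inj_on_image_set_diff[OF inj]) (use U Asub in auto)
      also have "\<dots> = T" using imS0 imT0 imA Teq by (simp add: image_Un)
      finally have "\<pi> ` snd P = \<pi> ` ((?S0 \<union> ?T0) - ?A)" using P ST by simp
      moreover have Rs: "(?S0 \<union> ?T0) - ?A \<subseteq> {..<n}" using U by auto
      ultimately have sP: "snd P = (?S0 \<union> ?T0) - ?A" using inj_on_image_eq_iff[OF inj Ps(2) Rs] by simp
      have "P = (?A, (?S0 \<union> ?T0) - ?A)" using fP sP by (cases P) simp
      thus "?u P = 0" using rep[OF sb] by simp
    qed
    finally show False using \<sigma>nz nz by simp
  qed
qed

theorem corollary3p3:
  fixes a b n :: nat
  assumes "b \<le> a" and "a + b \<le> n"
  shows "(\<forall>t\<le>b. (Phi n a b t :: ('a::field_char_0) tensor \<Rightarrow> 'a tensor) \<in> HomG n a b)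
    \<and> (\<forall>c :: nat \<Rightarrow> 'a. (\<forall>f\<in>W n a b. (\<lambda>x. \<Sum>t\<le>b. c t * Phi n a b t f x) = (\<lambda>x. 0))
          \<longrightarrow> (\<forall>t\<le>b. c t = 0))
    \<and> (\<forall>F\<in>HomG n a b. \<exists>c :: nat \<Rightarrow> 'a.
          \<forall>f\<in>W n a b. F f = (\<lambda>x. \<Sum>t\<le>b. c t * Phi n a b t f x))"
proof -
  have ba: "b \<le> a" and abn: "a + b \<le> n" using assms by auto
  let ?I = "idx n a \<times> idx n b"
  let ?w = "dl ({..<a}, {a..<a+b}) :: 'a tensor"
  define R where "R s = (({..<a - s} \<union> {a..<a+s}), ({..<a} \<union> {a..<a+b}) - ({..<a - s} \<union> {a..<a+s}))" for s
  define phi where "phi t s = Phi n a b t ?w (R s)" for t s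
  have P0: "({..<a}, {a..<a+b}) \<in> ?I" using abn by (auto simp: idx_mem)
  have wW: "?w \<in> W n a b" by (rule dl_W[OF P0])
  have low: "phi t s = 0" if "s \<le> b" "t < s" for s t
    using main_indep_data(2)[OF ba abn that(1) that(2), where 'a='a] by (simp add: phi_def R_def)
  have diag: "phi s s \<noteq> 0" if "s \<le> b" for s
    using main_indep_data(3)[OF ba abn that, where 'a='a] by (simp add: phi_def R_def)
  have part1: "\<forall>t\<le>b. (Phi n a b t :: 'a tensor \<Rightarrow> 'a tensor) \<in> HomG n a b"
  proof (intro allI impI)
    fix t assume t: "t \<le> b"
    show "(Phi n a b t :: 'a tensor \<Rightarrow> 'a tensor) \<in> HomG n a b" by (rule Phi_HomG[OF t])
  qed
  have part2: "\<forall>c :: nat \<Rightarrow> 'a. (\<forall>f\<in>W n a b. (\<lambda>x. \<Sum>t\<le>b. c t * Phi n a b t f x) = (\<lambda>x. 0))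
          \<longrightarrow> (\<forall>t\<le>b. c t = 0)"
  proof (rule allI, rule impI)
    fix c :: "nat \<Rightarrow> 'a"
    assume H: "\<forall>f\<in>W n a b. (\<lambda>x. \<Sum>t\<le>b. c t * Phi n a b t f x) = (\<lambda>x. 0)"
    have eq: "(\<Sum>t\<le>b. c t * phi t s) = 0" if "s \<le> b" for s
      using fun_cong[OF H[rule_format, OF wW], of "R s"] by (simp add: phi_def)
    show "\<forall>t\<le>b. c t = 0" by (rule tri_indep[OF low diag eq])
  qed
  have part3: "\<forall>F\<in>HomG n a b. \<exists>c :: nat \<Rightarrow> 'a. \<forall>f\<in>W n a b. F f = (\<lambda>x. \<Sum>t\<le>b. c t * Phi n a b t f x)"
  proof
    fix F :: "'a tensor \<Rightarrow> 'a tensor" assume F: "F \<in> HomG n a b"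
    have FW: "\<And>f. f \<in> W n a b \<Longrightarrow> F f \<in> W n a b"
      and Fadd: "\<And>f h. f \<in> W n a b \<Longrightarrow> h \<in> W n a b \<Longrightarrow> F (\<lambda>x. f x + h x) = (\<lambda>x. F f x + F h x)"
      and Fsm: "\<And>k f. f \<in> W n a b \<Longrightarrow> F (\<lambda>x. k * f x) = (\<lambda>x. k * F f x)"
      and Feq: "\<And>g f. g \<in> GL n \<Longrightarrow> f \<in> W n a b \<Longrightarrow> F (rho n a b g f) = rho n a b g (F f)"
      using F unfolding HomG_def by auto
    have "\<exists>c. \<forall>s\<le>b. (\<Sum>t\<le>b. c t * phi t s) = F ?w (R s)"
      by (rule tri_solve[where phi = phi and b = b]) (use low diag in auto)
    then obtain c where c: "\<forall>s\<le>b. (\<Sum>t\<le>b. c t * phi t s) = F ?w (R s)" by blast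
    define F' where "F' f = (\<lambda>x. F f x - (\<Sum>t\<le>b. c t * Phi n a b t f x))" for f
    have F'W: "F' f \<in> W n a b" if f: "f \<in> W n a b" for f
    proof -
      have "F f \<in> W n a b" by (rule FW[OF f])
      moreover have "\<And>t. t \<le> b \<Longrightarrow> Phi n a b t f \<in> W n a b" by (rule Phi_W)
      ultimately show ?thesis unfolding W_mem F'_def by auto
    qed
    have F'add: "F' (\<lambda>x. f x + h x) = (\<lambda>x. F' f x + F' h x)" if "f \<in> W n a b" "h \<in> W n a b" for f h
      unfolding F'_def Fadd[OF that] Phi_add by (rule ext) (simp add: distrib_left sum.distrib algebra_simps)
    have F'sm: "F' (\<lambda>x. k * f x) = (\<lambda>x. k * F' f x)" if "f \<in> W n a b" for k f
      unfolding F'_def Fsm[OF that] Phi_smult by (rule ext) (simp add: sum_distrib_left algebra_simps)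
    have F'eq: "F' (rho n a b g f) = rho n a b g (F' f)" if "g \<in> GL n" "f \<in> W n a b" for g f
    proof -
      have "F' (rho n a b g f) = (\<lambda>x. rho n a b g (F f) x - (\<Sum>t\<le>b. c t * rho n a b g (Phi n a b t f) x))"
        unfolding F'_def Feq[OF that] using Phi_equiv[of _ b n a g f] by simp
      also have "\<dots> = rho n a b g (F' f)"
        unfolding F'_def by (rule rho_lin[symmetric])
      finally show ?thesis .
    qed
    have rep: "F' ?w (R s) = 0" if "s \<le> b" for s
      using c that by (simp add: F'_def phi_def)
    have wz: "F' ?w = (\<lambda>x. 0)"
      by (rule w_zero[OF ba abn F'W F'sm F'eq]) (use rep in \<open>auto simp: R_def\<close>)
    let ?Z = "{f \<in> W n a b. F' f = (\<lambda>x. 0)}"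
    have "W n a b \<subseteq> ?Z"
    proof (rule generate[OF ba abn])
      fix f h :: "'a tensor" assume "f \<in> ?Z" "h \<in> ?Z"
      thus "(\<lambda>x. f x + h x) \<in> ?Z" using F'add by (auto simp: W_mem)
    next
      fix k :: 'a and f :: "'a tensor" assume "f \<in> ?Z"
      thus "(\<lambda>x. k * f x) \<in> ?Z" using F'sm by (auto simp: W_mem)
    next
      fix g :: "nat \<Rightarrow> nat \<Rightarrow> 'a" and f :: "'a tensor" assume "f \<in> ?Z" "g \<in> GL n"
      thus "rho n a b g f \<in> ?Z" using F'eq rho_W rho_zero by auto
    next
      show "?w \<in> ?Z" using wW wz by auto
    qed
    hence "\<forall>f\<in>W n a b. F f = (\<lambda>x. \<Sum>t\<le>b. c t * Phi n a b t f x)"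
      by (auto simp: F'_def fun_eq_iff)
    thus "\<exists>c :: nat \<Rightarrow> 'a. \<forall>f\<in>W n a b. F f = (\<lambda>x. \<Sum>t\<le>b. c t * Phi n a b t f x)" by blast
  qed
  show ?thesis using part1 part2 part3 by blast
qed


end
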